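(* With the notation of the context: (a) If $X\to X'$ is an elementary $K$-reduction of an element $X\in kF_\infty^+$, then $\pi(X)=\pi(X')$ and $\operatorname{wt}X\ge\operatorname{wt}X'$. If moreover $X$ is a single word, then $\operatorname{wt}X=\operatorname{wt}X'$ if and only if the reduction is of type (viii), and in that case $\operatorname{wt}'X<\operatorname{wt}'X'$. (b) $\pi(F_\infty^{\rm red})$ generates $K_\infty$ as a $k$-module. (c) $F_\infty^{\rm red}$ is exactly the set of words $X_1X_2\cdots X_m$ where $X_\nu=x_{i_\nu}^{\pm1}x_{i_\nu-1}^{\pm1}\cdots x_{j_\nu}^{\pm1}$ with $i_\nu\ge j_\nu\ge1$ ($1\le\nu\le m$), $i_1<i_2<\dots<i_m$, and all signs chosen independently (including the empty word, $m=0$).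
   Context: Let $k$ be a commutative ring with $1\ne0$ and $\alpha,\beta\in k$. For $n\ge1$, $B_n$ is the braid group with standard generators $\sigma_1,\dots,\sigma_{n-1}$. Put $P(x,\bar x,y,\bar y)=2\alpha-\beta^2-(x+y)-(\alpha^2-\beta)(\bar x+\bar y)+\beta(xy+yx)+\alpha(x\bar y+y\bar x+\bar xy+\bar yx)+(\alpha\beta-1)(\bar x\bar y+\bar y\bar x)-\alpha xyx-(\bar xyx+x\bar yx+xy\bar x)-\beta(\bar x\bar yx+x\bar y\bar x)+(\alpha-\beta^2)\bar x\bar y\bar x$, and let $Q$ be obtained from $P$ by swapping $x\leftrightarrow\bar x$, $y\leftrightarrow\bar y$, $\alpha\leftrightarrow\beta$. $K_n$ is the quotient of $kB_n$ by the two-sided ideal generated by $\sigma_1^3-\alpha\sigma_1^2+\beta\sigma_1-1$ and $\sigma_2\sigma_1^{-1}\sigma_2-P(\sigma_1,\sigma_1^{-1},\sigma_2,\sigma_2^{-1})$ (the latter when $n\ge3$); $s_i$ is the image of $\sigma_i$; $K_\infty$ is the direct limit of the $K_n$ along the maps induced by $B_n\subset B_{n+1}$. $F_n^+$ is the free monoid on the letters $x_1^{\pm1},\dots,x_{n-1}^{\pm1}$ (no cancellation), $F_\infty^+=\bigcup_nF_n^+$, $kF_\infty^+$ the free associative $k$-algebra on these letters, and $\pi:kF_\infty^+\to K_\infty$ the algebra map $x_i^{\pm1}\mapsto s_i^{\pm1}$. Basic replacements $U\to V$, for all $i\ge1$: (i) $x_ix_i^{-1}\to1$, $x_i^{-1}x_i\to1$;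 (ii) $x_i^2\to\alpha x_i-\beta+x_i^{-1}$; (iii) $x_i^{-2}\to\beta x_i^{-1}-\alpha+x_i$; (iv) $x_{i+1}^{\varepsilon_1}x_i^{\varepsilon_2}x_{i+1}^{\varepsilon_3}\to x_i^{\varepsilon_3}x_{i+1}^{\varepsilon_2}x_i^{\varepsilon_1}$ for $\varepsilon_j\in\{\pm1\}$ with $\varepsilon_2\in\{\varepsilon_1,\varepsilon_3\}$; (v) $x_{i+1}x_i^{-1}x_{i+1}\to P(x_i,x_i^{-1},x_{i+1},x_{i+1}^{-1})$; (vi) $x_{i+1}^{-1}x_ix_{i+1}^{-1}\to Q(x_i,x_i^{-1},x_{i+1},x_{i+1}^{-1})$; (vii) $x_{i+1}^{\varepsilon_1}x_i^{\varepsilon_2}Wx_{i+1}^{\varepsilon_3}\to VW$ whenever $x_{i+1}^{\varepsilon_1}x_i^{\varepsilon_2}x_{i+1}^{\varepsilon_3}\to V$ is one of (iv)–(vi) and $W$ is a word in $x_1^{\pm1},\dots,x_{i-1}^{\pm1}$; (viii) $x_j^{\varepsilon_1}x_i^{\varepsilon_2}\to x_i^{\varepsilon_2}x_j^{\varepsilon_1}$ for $\varepsilon_1,\varepsilon_2\in\{\pm1\}$, $j-1>i\ge1$. An elementary $K$-reduction of a word is $CUD\to CVD$ with $U\to V$ a basic replacement; of an element $\sum_{j=1}^mc_jW_j$ (pairwise distinct words $W_j$) it is $\sum_jc_jW_j\to c_1W_1'+\sum_{j\ge2}c_jW_j$ where $W_1\to W_1'$ is an elementary $K$-reduction of a word.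 A word is $K$-reduced if no elementary $K$-reduction applies to it; $F_\infty^{\rm red}$ is the set of $K$-reduced words. For a word $x_{i_1}^{\varepsilon_1}\cdots x_{i_m}^{\varepsilon_m}$, $\operatorname{wt}=\sum_ji_j$ and $\operatorname{wt}'=\sum_jj\,i_j$; the weight of an element of $kF_\infty^+$ is the maximum weight of its words with nonzero coefficient. *)

theory Defs
  imports Main
begin

text \<open>Letters of the free monoid: a pair (i, e) stands for x_i if e = True and for
  x_i^{-1} if e = False.  Elements of the free
  associative k-algebra are represented as coefficient functions on words
  (finitely supported where relevant).\<close>

type_synonym letter = "nat \<times> bool"
type_synonym word = "letter list"
type_synonym 'k elt = "word \<Rightarrow> 'k"

definition valid_word :: "word \<Rightarrow> bool" where
  "valid_word w \<longleftrightarrow> (\<forall>l\<in>set w. 1 \<le> fst l)"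

definition in_kF :: "'k::comm_ring_1 elt \<Rightarrow> bool" where
  "in_kF X \<longleftrightarrow> finite {w. X w \<noteq> 0} \<and> (\<forall>w. X w \<noteq> 0 \<longrightarrow> valid_word w)"

definition wd :: "word \<Rightarrow> 'k::comm_ring_1 elt" where
  "wd u = (\<lambda>w. if w = u then 1 else 0)"

definition emult :: "'k::comm_ring_1 elt \<Rightarrow> 'k elt \<Rightarrow> 'k elt" where
  "emult X Y = (\<lambda>w. \<Sum>i\<le>length w. X (take i w) * Y (drop i w))"

definition lc :: "('k::comm_ring_1 \<times> word) list \<Rightarrow> 'k elt" where
  "lc xs = (\<lambda>w. sum_list (map (\<lambda>(c, v). if v = w then c else 0) xs))"

definition Ppoly :: "'k::comm_ring_1 \<Rightarrow> 'k \<Rightarrow> letter \<Rightarrow> letter \<Rightarrow> letter \<Rightarrow> letter \<Rightarrow> 'k elt" where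
  "Ppoly \<alpha> \<beta> x xb y yb = lc
    [ (2*\<alpha> - \<beta>^2, []),
      (-1, [x]), (-1, [y]),
      (-(\<alpha>^2 - \<beta>), [xb]), (-(\<alpha>^2 - \<beta>), [yb]),
      (\<beta>, [x, y]), (\<beta>, [y, x]),
      (\<alpha>, [x, yb]), (\<alpha>, [y, xb]), (\<alpha>, [xb, y]), (\<alpha>, [yb, x]),
      (\<alpha>*\<beta> - 1, [xb, yb]), (\<alpha>*\<beta> - 1, [yb, xb]),
      (-\<alpha>, [x, y, x]),
      (-1, [xb, y, x]), (-1, [x, yb, x]), (-1, [x, y, xb]),
      (-\<beta>, [xb, yb, x]), (-\<beta>, [x, yb, xb]),
      (\<alpha> - \<beta>^2, [xb, yb, xb]) ]"

definition Qpoly :: "'k::comm_ring_1 \<Rightarrow> 'k \<Rightarrow> letter \<Rightarrow> letter \<Rightarrow> letter \<Rightarrow> letter \<Rightarrow> 'k elt" where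
  "Qpoly \<alpha> \<beta> x xb y yb = Ppoly \<beta> \<alpha> xb x yb y"

text \<open>Generators of the two-sided ideal presenting K_infinity as a quotient of the
  free algebra on the letters: group-algebra relations of the braid group B_infinity
  (inverses, braid relations, far commutation) together with the two defining
  relations of K.\<close>
inductive_set Kgens :: "'k::comm_ring_1 \<Rightarrow> 'k \<Rightarrow> 'k elt set" for \<alpha> \<beta> :: 'k where
  inv1: "1 \<le> i \<Longrightarrow> (\<lambda>w. wd [(i,True),(i,False)] w - wd [] w) \<in> Kgens \<alpha> \<beta>"
| inv2: "1 \<le> i \<Longrightarrow> (\<lambda>w. wd [(i,False),(i,True)] w - wd [] w) \<in> Kgens \<alpha> \<beta>"
| braid: "1 \<le> i \<Longrightarrow> (\<lambda>w. wd [(i,True),(Suc i,True),(i,True)] w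
            - wd [(Suc i,True),(i,True),(Suc i,True)] w) \<in> Kgens \<alpha> \<beta>"
| comm: "1 \<le> i \<Longrightarrow> Suc i < j \<Longrightarrow> (\<lambda>w. wd [(i,True),(j,True)] w - wd [(j,True),(i,True)] w) \<in> Kgens \<alpha> \<beta>"
| cubic: "(\<lambda>w. wd [(1,True),(1,True),(1,True)] w - \<alpha> * wd [(1,True),(1,True)] w
            + \<beta> * wd [(1,True)] w - wd [] w) \<in> Kgens \<alpha> \<beta>"
| prel: "(\<lambda>w. wd [(2,True),(1,False),(2,True)] w
            - Ppoly \<alpha> \<beta> (1,True) (1,False) (2,True) (2,False) w) \<in> Kgens \<alpha> \<beta>"

inductive_set Kideal :: "'k::comm_ring_1 \<Rightarrow> 'k \<Rightarrow> 'k elt set" for \<alpha> \<beta> :: 'k where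
  gen: "g \<in> Kgens \<alpha> \<beta> \<Longrightarrow> g \<in> Kideal \<alpha> \<beta>"
| zero: "(\<lambda>w. 0) \<in> Kideal \<alpha> \<beta>"
| add: "X \<in> Kideal \<alpha> \<beta> \<Longrightarrow> Y \<in> Kideal \<alpha> \<beta> \<Longrightarrow> (\<lambda>w. X w + Y w) \<in> Kideal \<alpha> \<beta>"
| smult: "X \<in> Kideal \<alpha> \<beta> \<Longrightarrow> (\<lambda>w. c * X w) \<in> Kideal \<alpha> \<beta>"
| lmult: "X \<in> Kideal \<alpha> \<beta> \<Longrightarrow> valid_word u \<Longrightarrow> emult (wd u) X \<in> Kideal \<alpha> \<beta>"
| rmult: "X \<in> Kideal \<alpha> \<beta> \<Longrightarrow> valid_word u \<Longrightarrow> emult X (wd u) \<in> Kideal \<alpha> \<beta>"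

text \<open>pi X = pi Y in K_infinity = kF_infinity^+ / Kideal.\<close>
definition pi_eq :: "'k::comm_ring_1 \<Rightarrow> 'k \<Rightarrow> 'k elt \<Rightarrow> 'k elt \<Rightarrow> bool" where
  "pi_eq \<alpha> \<beta> X Y \<longleftrightarrow> (\<lambda>w. X w - Y w) \<in> Kideal \<alpha> \<beta>"

datatype rtype = Ri | Rii | Riii | Riv | Rv | Rvi | Rvii | Rviii

definition triple_rep :: "'k::comm_ring_1 \<Rightarrow> 'k \<Rightarrow> nat \<Rightarrow> bool \<Rightarrow> bool \<Rightarrow> bool \<Rightarrow> 'k elt" where
  "triple_rep \<alpha> \<beta> i e1 e2 e3 =
     (if e2 = e1 \<or> e2 = e3 then wd [(i,e3),(Suc i,e2),(i,e1)]
      else if e1 then Ppoly \<alpha> \<beta> (i,True) (i,False) (Suc i,True) (Suc i,False)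
      else Qpoly \<alpha> \<beta> (i,True) (i,False) (Suc i,True) (Suc i,False))"

definition triple_type :: "bool \<Rightarrow> bool \<Rightarrow> bool \<Rightarrow> rtype" where
  "triple_type e1 e2 e3 = (if e2 = e1 \<or> e2 = e3 then Riv else if e1 then Rv else Rvi)"

inductive basic_rep :: "'k::comm_ring_1 \<Rightarrow> 'k \<Rightarrow> rtype \<Rightarrow> word \<Rightarrow> 'k elt \<Rightarrow> bool"
  for \<alpha> \<beta> :: 'k where
  r1a: "1 \<le> i \<Longrightarrow> basic_rep \<alpha> \<beta> Ri [(i,True),(i,False)] (wd [])"
| r1b: "1 \<le> i \<Longrightarrow> basic_rep \<alpha> \<beta> Ri [(i,False),(i,True)] (wd [])"
| r2: "1 \<le> i \<Longrightarrow> basic_rep \<alpha> \<beta> Rii [(i,True),(i,True)]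
          (lc [(\<alpha>, [(i,True)]), (-\<beta>, []), (1, [(i,False)])])"
| r3: "1 \<le> i \<Longrightarrow> basic_rep \<alpha> \<beta> Riii [(i,False),(i,False)]
          (lc [(\<beta>, [(i,False)]), (-\<alpha>, []), (1, [(i,True)])])"
| r456: "1 \<le> i \<Longrightarrow> basic_rep \<alpha> \<beta> (triple_type e1 e2 e3)
          [(Suc i,e1),(i,e2),(Suc i,e3)] (triple_rep \<alpha> \<beta> i e1 e2 e3)"
| r7: "1 \<le> i \<Longrightarrow> (\<forall>l\<in>set W. 1 \<le> fst l \<and> fst l < i) \<Longrightarrow>
         basic_rep \<alpha> \<beta> Rvii ([(Suc i,e1),(i,e2)] @ W @ [(Suc i,e3)])
           (emult (triple_rep \<alpha> \<beta> i e1 e2 e3) (wd W))"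
| r8: "1 \<le> i \<Longrightarrow> Suc i < j \<Longrightarrow> basic_rep \<alpha> \<beta> Rviii [(j,e1),(i,e2)] (wd [(i,e2),(j,e1)])"

definition elem_red_word :: "'k::comm_ring_1 \<Rightarrow> 'k \<Rightarrow> rtype \<Rightarrow> word \<Rightarrow> 'k elt \<Rightarrow> bool" where
  "elem_red_word \<alpha> \<beta> t X X' \<longleftrightarrow>
     (\<exists>C U V D. X = C @ U @ D \<and> basic_rep \<alpha> \<beta> t U V \<and> X' = emult (emult (wd C) V) (wd D))"

definition elem_red :: "'k::comm_ring_1 \<Rightarrow> 'k \<Rightarrow> 'k elt \<Rightarrow> 'k elt \<Rightarrow> bool" where
  "elem_red \<alpha> \<beta> X X' \<longleftrightarrow>
     (\<exists>W W' t. X W \<noteq> 0 \<and> elem_red_word \<alpha> \<beta> t W W' \<and>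
        X' = (\<lambda>w. X w - (if w = W then X W else 0) + X W * W' w))"

definition red_words :: "'k::comm_ring_1 \<Rightarrow> 'k \<Rightarrow> word set" where
  "red_words \<alpha> \<beta> = {w. valid_word w \<and> \<not> (\<exists>t W'. elem_red_word \<alpha> \<beta> t w W')}"

definition wt :: "word \<Rightarrow> nat" where
  "wt w = sum_list (map fst w)"

definition wtp :: "word \<Rightarrow> nat" where
  "wtp w = (\<Sum>j<length w. (j + 1) * fst (w ! j))"

definition wt_elt :: "'k::comm_ring_1 elt \<Rightarrow> nat" where
  "wt_elt X = Max (insert 0 (wt ` {w. X w \<noteq> 0}))"

definition is_block :: "word \<Rightarrow> bool" where
  "is_block b \<longleftrightarrow> (\<exists>i j. 1 \<le> j \<and> j \<le> i \<and> map fst b = rev [j..<Suc i])"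

definition normal_words :: "word set" where
  "normal_words = {w. \<exists>bs. (\<forall>b\<in>set bs. is_block b) \<and>
       sorted_wrt (<) (map (\<lambda>b. fst (hd b)) bs) \<and> w = concat bs}"

end

theory Submission
  imports Defs
begin

lemma take_eq_len: "i \<le> length w \<Longrightarrow> take i w = u \<Longrightarrow> i = length u"
  by auto

lemma emult_wd_left:
  "emult (wd u) X w = (if take (length u) w = u then X (drop (length u) w) else 0)"
proof -
  have "emult (wd u) X w = (\<Sum>i\<le>length w. if i = length u then (if take (length u) w = u then X (drop (length u) w) else 0) else 0)"
    unfolding emult_def wd_def
    by (rule sum.cong) auto
  also have "\<dots> = (if take (length u) w = u then X (drop (length u) w) else 0)"
    by (cases "length u \<le> length w") (auto simp: sum.delta)
  finally show ?thesis .
qed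

lemma app_eq_conv2: "(x @ v = z) \<longleftrightarrow> (length v \<le> length z \<and> drop (length z - length v) z = v \<and> x = take (length z - length v) z)"
proof
  assume "x @ v = z" thus "length v \<le> length z \<and> drop (length z - length v) z = v \<and> x = take (length z - length v) z"
    by auto
next
  assume h: "length v \<le> length z \<and> drop (length z - length v) z = v \<and> x = take (length z - length v) z"
  then show "x @ v = z" by (metis append_take_drop_id)
qed

lemma emult_wd_right:
  "emult X (wd v) w = (if length v \<le> length w \<and> drop (length w - length v) w = v then X (take (length w - length v) w) else 0)"
proof -
  have "emult X (wd v) w = (\<Sum>i\<le>length w. if i = length w - length v then (if length v \<le> length w \<and> drop (length w - length v) w = v then X (take (length w - length v) w) else 0) else 0)"
    unfolding emult_def wd_def
    by (rule sum.cong) auto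
  also have "\<dots> = (if length v \<le> length w \<and> drop (length w - length v) w = v then X (take (length w - length v) w) else 0)"
    by (auto simp: sum.delta)
  finally show ?thesis .
qed

lemma lc_Nil: "lc [] = (\<lambda>w. 0)" by (simp add: lc_def)
lemma lc_Cons: "lc ((c,v) # L) = (\<lambda>w. (if v = w then c else 0) + lc L w)"
  by (simp add: lc_def)
lemma lc_append: "lc (L1 @ L2) = (\<lambda>w. lc L1 w + lc L2 w)"
  by (simp add: lc_def)
lemma lc_scale_pt: "lc (map (\<lambda>(c,w). (d*c, w)) L) w = d * lc L w"
  by (induction L) (auto simp: lc_def algebra_simps)
lemma lc_scale: "lc (map (\<lambda>(c,w). (d*c, w)) L) = (\<lambda>w. d * lc L w)"
  using lc_scale_pt by blast
lemma lc_neg_pt: "lc (map (\<lambda>(c,w). (- c, w)) L) w = - lc L w"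
  by (induction L) (auto simp: lc_def algebra_simps)
lemma lc_neg: "lc (map (\<lambda>(c,w). (- c, w)) L) = (\<lambda>w. - lc L w)"
  using lc_neg_pt by blast

lemma emult_wd_lc_left: "emult (wd u) (lc L) = lc (map (\<lambda>(c,w). (c, u@w)) L)"
proof (rule ext)
  fix z
  show "emult (wd u) (lc L) z = lc (map (\<lambda>(c,w). (c, u@w)) L) z"
    unfolding emult_wd_left
    by (induction L) (auto simp: lc_def append_eq_conv_conj)
qed

lemma emult_wd_lc_right: "emult (lc L) (wd v) = lc (map (\<lambda>(c,w). (c, w@v)) L)"
proof (rule ext)
  fix z
  show "emult (lc L) (wd v) z = lc (map (\<lambda>(c,w). (c, w@v)) L) z"
    unfolding emult_wd_right
  proof (induction L)
    case Nil then show ?case by (simp add: lc_def)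
  next
    case (Cons a L)
    obtain c x where a: "a = (c,x)" by fastforce
    have "(x @ v = z) = (length v \<le> length z \<and> drop (length z - length v) z = v \<and> take (length z - length v) z = x)"
      using app_eq_conv2[of x v z] by auto
    then show ?case using Cons.IH by (auto simp: lc_def a)
  qed
qed

lemma wd_lc: "wd u = lc [(1,u)]"
  by (auto simp: lc_def wd_def)

lemma lc_notin: "w \<notin> snd ` set L \<Longrightarrow> lc L w = 0"
  by (induction L) (auto simp: lc_def)
lemma lc_zero_notin: "lc L w \<noteq> 0 \<Longrightarrow> w \<in> snd ` set L"
  using lc_notin by blast

lemma lc_eqI: "(\<And>w. w \<in> set (map snd (L1 @ L2)) \<Longrightarrow> lc L1 w = lc L2 w) \<Longrightarrow> lc L1 = lc L2"
proof (rule ext)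
  fix w assume h: "\<And>w. w \<in> set (map snd (L1 @ L2)) \<Longrightarrow> lc L1 w = lc L2 w"
  show "lc L1 w = lc L2 w"
  proof (cases "w \<in> set (map snd (L1 @ L2))")
    case True then show ?thesis by (rule h)
  next
    case False
    then have "lc L1 w = 0" "lc L2 w = 0" using lc_zero_notin[of L1 w] lc_zero_notin[of L2 w]
      by (force simp: image_iff)+
    then show ?thesis by simp
  qed
qed

lemma lc_eqI2: "list_all (\<lambda>w. lc L1 w = lc L2 w) (map snd (L1 @ L2)) \<Longrightarrow> lc L1 = lc L2"
  by (rule lc_eqI) (simp add: list_all_iff)

definition relK :: "'k::comm_ring_1 \<Rightarrow> 'k \<Rightarrow> ('k \<times> word) list \<Rightarrow> bool" where
  "relK a b L \<longleftrightarrow> lc L \<in> Kideal a b"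

definition tm :: "'k::comm_ring_1 \<Rightarrow> word \<Rightarrow> ('k \<times> word) list \<Rightarrow> word \<Rightarrow> ('k \<times> word) list" where
  "tm c p L s = map (\<lambda>(d,w). (c*d, p@w@s)) L"

definition negl :: "('k::comm_ring_1 \<times> word) list \<Rightarrow> ('k \<times> word) list" where
  "negl L = map (\<lambda>(c,w). (-c, w)) L"

lemma lc_negl: "lc (negl L) w = - lc L w" by (simp add: negl_def lc_neg_pt)

lemma valid_append[simp]: "valid_word (u @ v) \<longleftrightarrow> valid_word u \<and> valid_word v"
  by (auto simp: valid_word_def)
lemma valid_Cons[simp]: "valid_word (l # v) \<longleftrightarrow> 1 \<le> fst l \<and> valid_word v"
  by (auto simp: valid_word_def)
lemma valid_Nil[simp]: "valid_word []"
  by (auto simp: valid_word_def)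

context fixes \<alpha> \<beta> :: "'k::comm_ring_1" begin

lemma relK_lc: "relK \<alpha> \<beta> L \<Longrightarrow> lc L = lc L' \<Longrightarrow> relK \<alpha> \<beta> L'"
  by (simp add: relK_def)

lemma relK_Nil: "relK \<alpha> \<beta> []"
  by (simp add: relK_def lc_Nil Kideal.zero)

lemma relK_append: "relK \<alpha> \<beta> L1 \<Longrightarrow> relK \<alpha> \<beta> L2 \<Longrightarrow> relK \<alpha> \<beta> (L1 @ L2)"
  by (simp add: relK_def lc_append Kideal.add)

lemma relK_scale: "relK \<alpha> \<beta> L \<Longrightarrow> relK \<alpha> \<beta> (map (\<lambda>(c,w). (d*c, w)) L)"
  by (simp add: relK_def lc_scale Kideal.smult)

lemma relK_negl: "relK \<alpha> \<beta> L \<Longrightarrow> relK \<alpha> \<beta> (negl L)"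
  using relK_scale[of L "-1"] by (simp add: negl_def)

lemma relK_mult: "relK \<alpha> \<beta> L \<Longrightarrow> valid_word u \<Longrightarrow> valid_word v \<Longrightarrow>
   relK \<alpha> \<beta> (map (\<lambda>(c,w). (c, u@w@v)) L)"
proof -
  assume h: "relK \<alpha> \<beta> L" "valid_word u" "valid_word v"
  have "emult (wd u) (emult (lc L) (wd v)) \<in> Kideal \<alpha> \<beta>"
    using h by (intro Kideal.lmult Kideal.rmult) (auto simp: relK_def)
  also have "emult (wd u) (emult (lc L) (wd v)) = lc (map (\<lambda>(c,w). (c, u@w@v)) L)"
    by (simp add: emult_wd_lc_right emult_wd_lc_left comp_def split_def)
  finally show ?thesis by (simp add: relK_def)
qed

lemma relK_tm: "relK \<alpha> \<beta> L \<Longrightarrow> valid_word p \<Longrightarrow> valid_word s \<Longrightarrow> relK \<alpha> \<beta> (tm c p L s)"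
proof -
  assume h: "relK \<alpha> \<beta> L" "valid_word p" "valid_word s"
  have "relK \<alpha> \<beta> (map (\<lambda>(d,w). (c*d, w)) (map (\<lambda>(d,w). (d, p@w@s)) L))"
    by (rule relK_scale, rule relK_mult) (use h in auto)
  then show ?thesis by (simp add: tm_def comp_def split_def)
qed

definition weq :: "word \<Rightarrow> word \<Rightarrow> bool" where
  "weq u v \<longleftrightarrow> relK \<alpha> \<beta> [(1,u),(-1,v)]"

lemma weq_refl: "weq u u"
  unfolding weq_def by (rule relK_lc[OF relK_Nil]) (auto simp: lc_def)

lemma weq_sym: "weq u v \<Longrightarrow> weq v u"
  unfolding weq_def by (drule relK_negl, erule relK_lc) (auto simp: lc_def negl_def)

lemma weq_trans: "weq u v \<Longrightarrow> weq v w \<Longrightarrow> weq u w"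
  unfolding weq_def by (drule (1) relK_append, erule relK_lc) (auto simp: lc_def)

lemma weq_cong: "weq u v \<Longrightarrow> valid_word p \<Longrightarrow> valid_word s \<Longrightarrow> weq (p@u@s) (p@v@s)"
  unfolding weq_def by (drule (2) relK_mult, erule relK_lc) (auto simp: lc_def)

lemma weq_congL: "weq u v \<Longrightarrow> valid_word p \<Longrightarrow> weq (p@u) (p@v)"
  using weq_cong[of u v p "[]"] by simp
lemma weq_congR: "weq u v \<Longrightarrow> valid_word s \<Longrightarrow> weq (u@s) (v@s)"
  using weq_cong[of u v "[]" s] by simp

lemma relK_subst_aux: "list_all2 (\<lambda>(c,w) (c',w'). c = c' \<and> weq w w') L L' \<Longrightarrow> relK \<alpha> \<beta> (L' @ negl L)"
proof (induction rule: list_all2_induct)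
  case Nil then show ?case by (simp add: negl_def relK_Nil)
next
  case (Cons x xs y ys)
  obtain c w where x: "x = (c,w)" by fastforce
  obtain c' w' where y: "y = (c',w')" by fastforce
  have "relK \<alpha> \<beta> (map (\<lambda>(d,z). (-c*d, z)) [(1,w),(-1,w')])"
    using Cons(1) x y by (intro relK_scale) (auto simp: weq_def)
  from relK_append[OF this Cons(3)] show ?case
    by (rule relK_lc) (use Cons(1) x y in \<open>auto simp: lc_def negl_def\<close>)
qed

lemma relK_subst: "relK \<alpha> \<beta> L \<Longrightarrow> list_all2 (\<lambda>(c,w) (c',w'). c = c' \<and> weq w w') L L' \<Longrightarrow> relK \<alpha> \<beta> L'"
proof -
  assume h: "relK \<alpha> \<beta> L" "list_all2 (\<lambda>(c,w) (c',w'). c = c' \<and> weq w w') L L'"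
  have "relK \<alpha> \<beta> (L @ (L' @ negl L))"
    using relK_append[OF h(1) relK_subst_aux[OF h(2)]] .
  then show ?thesis
    by (rule relK_lc) (auto simp: lc_append lc_negl)
qed

end

definition inv_l :: "letter \<Rightarrow> letter" where "inv_l l = (fst l, \<not> snd l)"
definition invw :: "word \<Rightarrow> word" where "invw u = rev (map inv_l u)"
definition shl :: "letter \<Rightarrow> letter" where "shl l = (Suc (fst l), snd l)"
definition dl :: "nat \<Rightarrow> word" where "dl m = map (\<lambda>j. (j,True)) [1..<m+2]"

lemma inv_l_inv[simp]: "inv_l (inv_l l) = l" by (simp add: inv_l_def)
lemma fst_inv_l[simp]: "fst (inv_l l) = fst l" by (simp add: inv_l_def)
lemma invw_Nil[simp]: "invw [] = []" by (simp add: invw_def)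
lemma invw_Cons[simp]: "invw (l # u) = invw u @ [inv_l l]" by (simp add: invw_def)
lemma invw_append[simp]: "invw (u @ v) = invw v @ invw u" by (simp add: invw_def)
lemma invw_invw[simp]: "invw (invw u) = u" by (simp add: invw_def rev_map comp_def)
lemma valid_invw[simp]: "valid_word (invw u) = valid_word u" by (auto simp: invw_def valid_word_def)
lemma valid_dl[simp]: "valid_word (dl m)" by (auto simp: dl_def valid_word_def)

context fixes \<alpha> \<beta> :: "'k::comm_ring_1" begin

abbreviation "weqK \<equiv> weq \<alpha> \<beta>"

lemma gen_relK: "g \<in> Kgens \<alpha> \<beta> \<Longrightarrow> g = lc L \<Longrightarrow> relK \<alpha> \<beta> L"
  by (simp add: relK_def Kideal.gen)

lemma weq_inv: "1 \<le> fst l \<Longrightarrow> weqK [l, inv_l l] []"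
proof -
  assume h: "1 \<le> fst l"
  obtain i e where l: "l = (i,e)" by fastforce
  show ?thesis
  proof (cases e)
    case True
    show ?thesis unfolding weq_def
      by (rule gen_relK[OF Kgens.inv1[of "i"]]) (use h l True in \<open>auto simp: lc_def wd_def inv_l_def\<close>)
  next
    case False
    show ?thesis unfolding weq_def
      by (rule gen_relK[OF Kgens.inv2[of "i"]]) (use h l False in \<open>auto simp: lc_def wd_def inv_l_def\<close>)
  qed
qed

lemma weq_braid: "1 \<le> i \<Longrightarrow> weqK [(i,True),(Suc i,True),(i,True)] [(Suc i,True),(i,True),(Suc i,True)]"
  unfolding weq_def by (rule gen_relK[OF Kgens.braid[of "i"]]) (auto simp: lc_def wd_def)

lemma weq_comm: "1 \<le> i \<Longrightarrow> Suc i < j \<Longrightarrow> weqK [(i,True),(j,True)] [(j,True),(i,True)]"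
  unfolding weq_def by (rule gen_relK[OF Kgens.comm[of i j]]) (auto simp: lc_def wd_def)

lemma weq_cancel: "valid_word p \<Longrightarrow> valid_word s \<Longrightarrow> 1 \<le> fst l \<Longrightarrow> weqK (p @ [l, inv_l l] @ s) (p @ s)"
  using weq_cong[OF weq_inv[of l] ] by simp

lemma weq_cancel': "valid_word p \<Longrightarrow> valid_word s \<Longrightarrow> 1 \<le> fst l \<Longrightarrow> weqK (p @ [inv_l l, l] @ s) (p @ s)"
  using weq_cancel[of p s "inv_l l"] by simp

lemma mvR: "weqK u (v @ [l]) \<Longrightarrow> valid_word u \<Longrightarrow> valid_word v \<Longrightarrow> 1 \<le> fst l \<Longrightarrow> weqK (u @ [inv_l l]) v"
proof -
  assume h: "weqK u (v @ [l])" "valid_word u" "valid_word v" "1 \<le> fst l"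
  have "weqK (u @ [inv_l l]) (v @ [l] @ [inv_l l])" using weq_congR[OF h(1), of "[inv_l l]"] h by simp
  moreover have "weqK (v @ [l, inv_l l] @ []) (v @ [])" using weq_cancel[of v "[]" l] h by simp
  ultimately show ?thesis using weq_trans by fastforce
qed

lemma mvL: "weqK ([l] @ u) v \<Longrightarrow> valid_word u \<Longrightarrow> valid_word v \<Longrightarrow> 1 \<le> fst l \<Longrightarrow> weqK u ([inv_l l] @ v)"
proof -
  assume h: "weqK ([l] @ u) v" "valid_word u" "valid_word v" "1 \<le> fst l"
  have "weqK ([] @ [inv_l l, l] @ u) ([] @ u)" using weq_cancel'[of "[]" u l] h by simp
  moreover have "weqK ([inv_l l] @ [l] @ u) ([inv_l l] @ v)" using weq_congL[OF h(1), of "[inv_l l]"] h by simp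
  ultimately show ?thesis using weq_trans weq_sym by fastforce
qed

lemma weq_u_invw: "valid_word u \<Longrightarrow> weqK (u @ invw u) []"
proof (induction u)
  case Nil then show ?case by (simp add: weq_refl)
next
  case (Cons l u)
  have "weqK ([l] @ (u @ invw u) @ [inv_l l]) ([l] @ [] @ [inv_l l])"
    using Cons by (intro weq_cong) auto
  moreover have "weqK ([] @ [l, inv_l l] @ []) ([] @ [])" using weq_cancel[of "[]" "[]" l] Cons.prems by simp
  ultimately show ?case using weq_trans by simp
qed

lemma weq_invw_u: "valid_word u \<Longrightarrow> weqK (invw u @ u) []"
  using weq_u_invw[of "invw u"] by simp

lemma weq_invw: "weqK u v \<Longrightarrow> valid_word u \<Longrightarrow> valid_word v \<Longrightarrow> weqK (invw u) (invw v)"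
proof -
  assume h: "weqK u v" "valid_word u" "valid_word v"
  have 1: "weqK (invw u @ [] ) (invw u @ (v @ invw v))"
    using weq_congL[OF weq_sym[OF weq_u_invw[of v]], of "invw u"] h by simp
  have 2: "weqK (invw u @ v @ invw v) (invw u @ u @ invw v)"
    using weq_cong[OF weq_sym[OF h(1)], of "invw u" "invw v"] h by simp
  have 3: "weqK ((invw u @ u) @ invw v) ([] @ invw v)"
    using weq_congR[OF weq_invw_u[of u], of "invw v"] h by simp
  show ?thesis using weq_trans[OF weq_trans[OF 1 2] ] 3 by simp
qed

definition commutes :: "word \<Rightarrow> word \<Rightarrow> bool" where
  "commutes a b \<longleftrightarrow> weqK (a @ b) (b @ a)"

lemma commutes_sym: "commutes a b \<Longrightarrow> commutes b a"
  by (simp add: commutes_def weq_sym)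

lemma commutes_inv: "commutes [l] b \<Longrightarrow> valid_word b \<Longrightarrow> 1 \<le> fst l \<Longrightarrow> commutes [inv_l l] b"
proof -
  assume h: "commutes [l] b" "valid_word b" "1 \<le> fst l"
  have 1: "weqK (inv_l l # b @ [l, inv_l l]) (inv_l l # b)"
    using weq_cancel[of "[inv_l l] @ b" "[]" l] h by simp
  have 2: "weqK (inv_l l # l # b @ [inv_l l]) (inv_l l # b @ [l, inv_l l])"
    using weq_cong[OF h(1)[unfolded commutes_def], of "[inv_l l]" "[inv_l l]"] h by simp
  have 3: "weqK (inv_l l # l # b @ [inv_l l]) (b @ [inv_l l])"
    using weq_cancel'[of "[]" "b @ [inv_l l]" l] h by simp
  have "weqK (inv_l l # b) (b @ [inv_l l])"
    using weq_trans[OF weq_sym[OF 1] weq_trans[OF weq_sym[OF 2] 3]] .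
  then show ?thesis unfolding commutes_def by simp
qed

definition far :: "letter \<Rightarrow> letter \<Rightarrow> bool" where
  "far l m \<longleftrightarrow> 1 \<le> fst l \<and> 1 \<le> fst m \<and> (Suc (fst l) < fst m \<or> Suc (fst m) < fst l)"

lemma commutes_pos: "1 \<le> i \<Longrightarrow> Suc i < j \<Longrightarrow> commutes [(i,e)] [(j,f)]"
proof -
  assume h: "1 \<le> i" "Suc i < j"
  have a: "commutes [(i,True)] [(j,True)]" using weq_comm[OF h] by (simp add: commutes_def)
  have b: "commutes [(i,e)] [(j,True)]"
    using a commutes_inv[OF a] h by (cases e) (auto simp: inv_l_def)
  have c: "commutes [(j,f)] [(i,e)]"
    using commutes_sym[OF b] commutes_inv[OF commutes_sym[OF b]] h by (cases f) (auto simp: inv_l_def)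
  show ?thesis using commutes_sym[OF c] .
qed

lemma commutes_far: "far l m \<Longrightarrow> commutes [l] [m]"
proof -
  assume h: "far l m"
  obtain i e where l: "l = (i,e)" by fastforce
  obtain j f where m: "m = (j,f)" by fastforce
  show ?thesis
  proof (cases "Suc i < j")
    case True then show ?thesis using h l m commutes_pos[of i j e f] by (simp add: far_def)
  next
    case False then show ?thesis using h l m commutes_sym[OF commutes_pos[of j i f e]] by (simp add: far_def)
  qed
qed

lemma commutes_list: "(\<forall>m\<in>set W. far l m) \<Longrightarrow> commutes [l] W"
proof (induction W)
  case Nil then show ?case by (simp add: commutes_def weq_refl)
next
  case (Cons m W)
  have vl: "1 \<le> fst l" "1 \<le> fst m" "valid_word W" using Cons.prems by (auto simp: far_def valid_word_def)
  have 1: "weqK ([] @ [l, m] @ W) ([] @ [m, l] @ W)"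
    using weq_cong[OF commutes_far[of l m, unfolded commutes_def], of "[]" W] Cons.prems vl by simp
  have 2: "weqK ([m] @ (l # W) @ []) ([m] @ (W @ [l]) @ [])"
    using weq_cong[OF Cons.IH[unfolded commutes_def], of "[m]" "[]"] Cons.prems vl by simp
  show ?case unfolding commutes_def using weq_trans[OF 1] 2 by simp
qed

end

lemma list_all2_mapI: "(\<And>x. x \<in> set L \<Longrightarrow> P (f x) (g x)) \<Longrightarrow> list_all2 P (map f L) (map g L)"
  by (induction L) auto

lemma dl_split: "1 \<le> j \<Longrightarrow> j \<le> m \<Longrightarrow>
  dl m = map (\<lambda>k. (k,True)) [1..<j] @ [(j,True),(Suc j,True)] @ map (\<lambda>k. (k,True)) [j+2..<m+2]"
proof -
  assume h: "1 \<le> j" "j \<le> m"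
  have "[1..<m+2] = [1..<j] @ [j..<m+2]" using upt_add_eq_append[of 1 j "m+2-j"] h by simp
  also have "[j..<m+2] = j # Suc j # [j+2..<m+2]" using h by (simp add: upt_conv_Cons)
  finally show ?thesis by (simp add: dl_def)
qed

context fixes \<alpha> \<beta> :: "'k::comm_ring_1" begin

lemma weq_triple: "1 \<le> i \<Longrightarrow> e2 = e1 \<or> e2 = e3 \<Longrightarrow>
  weqK \<alpha> \<beta> [(Suc i,e1),(i,e2),(Suc i,e3)] [(i,e3),(Suc i,e2),(i,e1)]"
proof -
  assume h: "1 \<le> i" "e2 = e1 \<or> e2 = e3"
  have B0: "weqK \<alpha> \<beta> [(i,True),(Suc i,True),(i,True)] [(Suc i,True),(i,True),(Suc i,True)]"
    using weq_braid h by blast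
  have TTT: "weqK \<alpha> \<beta> [(Suc i,True),(i,True),(Suc i,True)] [(i,True),(Suc i,True),(i,True)]"
    using weq_sym[OF B0] .
  have t1: "weqK \<alpha> \<beta> [(Suc i,True),(i,True)] [(i,False),(Suc i,True),(i,True),(Suc i,True)]"
    using mvL[of \<alpha> \<beta> "(i,True)" "[(Suc i,True),(i,True)]" "[(Suc i,True),(i,True),(Suc i,True)]"] B0 h
    by (simp add: inv_l_def)
  have TTF: "weqK \<alpha> \<beta> [(Suc i,True),(i,True),(Suc i,False)] [(i,False),(Suc i,True),(i,True)]"
    using mvR[of \<alpha> \<beta> "[(Suc i,True),(i,True)]" "[(i,False),(Suc i,True),(i,True)]" "(Suc i,True)"] t1 h
    by (simp add: inv_l_def)
  have t2: "weqK \<alpha> \<beta> [(i,True),(Suc i,True)] [(Suc i,False),(i,True),(Suc i,True),(i,True)]"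
    using mvL[of \<alpha> \<beta> "(Suc i,True)" "[(i,True),(Suc i,True)]" "[(i,True),(Suc i,True),(i,True)]"] TTT h
    by (simp add: inv_l_def)
  have t3: "weqK \<alpha> \<beta> [(i,True),(Suc i,True),(i,False)] [(Suc i,False),(i,True),(Suc i,True)]"
    using mvR[of \<alpha> \<beta> "[(i,True),(Suc i,True)]" "[(Suc i,False),(i,True),(Suc i,True)]" "(i,True)"] t2 h
    by (simp add: inv_l_def)
  have FTT: "weqK \<alpha> \<beta> [(Suc i,False),(i,True),(Suc i,True)] [(i,True),(Suc i,True),(i,False)]"
    using weq_sym[OF t3] .
  have FFT: "weqK \<alpha> \<beta> [(Suc i,False),(i,False),(Suc i,True)] [(i,True),(Suc i,False),(i,False)]"
    using weq_invw[OF FTT] h by (simp add: inv_l_def)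
  have TFF: "weqK \<alpha> \<beta> [(Suc i,True),(i,False),(Suc i,False)] [(i,False),(Suc i,False),(i,True)]"
    using weq_invw[OF TTF] h by (simp add: inv_l_def)
  have FFF: "weqK \<alpha> \<beta> [(Suc i,False),(i,False),(Suc i,False)] [(i,False),(Suc i,False),(i,False)]"
    using weq_invw[OF TTT] h by (simp add: inv_l_def)
  show ?thesis using h TTT TTF FTT FFT TFF FFF by (cases e1; cases e2; cases e3) auto
qed

lemma weq_far_swap: "1 \<le> i \<Longrightarrow> Suc i < j \<Longrightarrow> weqK \<alpha> \<beta> [(j,e1),(i,e2)] [(i,e2),(j,e1)]"
  using commutes_pos[where i=i and j=j and e=e2 and f=e1 and \<alpha>=\<alpha> and \<beta>=\<beta>] by (simp add: commutes_def weq_sym)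

lemma conj_inv: "weqK \<alpha> \<beta> (D @ [l]) (l' # D) \<Longrightarrow> valid_word D \<Longrightarrow> 1 \<le> fst l \<Longrightarrow> 1 \<le> fst l' \<Longrightarrow>
   weqK \<alpha> \<beta> (D @ [inv_l l]) (inv_l l' # D)"
proof -
  assume h: "weqK \<alpha> \<beta> (D @ [l]) (l' # D)" "valid_word D" "1 \<le> fst l" "1 \<le> fst l'"
  have 1: "weqK \<alpha> \<beta> (inv_l l' # D @ [l, inv_l l]) (inv_l l' # D)"
    using weq_cancel[of "[inv_l l'] @ D" "[]" l \<alpha> \<beta>] h by simp
  have 2: "weqK \<alpha> \<beta> (inv_l l' # D @ [l, inv_l l]) (inv_l l' # l' # D @ [inv_l l])"
    using weq_cong[OF h(1), of "[inv_l l']" "[inv_l l]"] h by simp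
  have 3: "weqK \<alpha> \<beta> (inv_l l' # l' # D @ [inv_l l]) (D @ [inv_l l])"
    using weq_cancel'[of "[]" "D @ [inv_l l]" l' \<alpha> \<beta>] h by simp
  show ?thesis using weq_sym[OF weq_trans[OF weq_trans[OF weq_sym[OF 1] 2] 3]] .
qed

lemma dl_conj_pos: "1 \<le> j \<Longrightarrow> j \<le> m \<Longrightarrow> weqK \<alpha> \<beta> (dl m @ [(j,True)]) ((Suc j,True) # dl m)"
proof -
  assume h: "1 \<le> j" "j \<le> m"
  define A where "A = map (\<lambda>k. (k,True)) [1..<j]"
  define Bw where "Bw = map (\<lambda>k. (k,True)) [j+2..<m+2]"
  have dm: "dl m = A @ [(j,True),(Suc j,True)] @ Bw" using dl_split[OF h] by (simp add: A_def Bw_def)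
  have vA: "valid_word A" and vB: "valid_word Bw" by (auto simp: A_def Bw_def valid_word_def)
  have cB: "commutes \<alpha> \<beta> [(j,True)] Bw"
    by (rule commutes_list) (use h in \<open>auto simp: Bw_def far_def\<close>)
  have cA: "commutes \<alpha> \<beta> [(Suc j,True)] A"
    by (rule commutes_list) (use h in \<open>auto simp: A_def far_def\<close>)
  have 1: "weqK \<alpha> \<beta> (A @ [(j,True),(Suc j,True)] @ Bw @ [(j,True)]) (A @ [(j,True),(Suc j,True),(j,True)] @ Bw)"
    using weq_congL[OF weq_sym[OF cB[unfolded commutes_def]], of "A @ [(j,True),(Suc j,True)]"] vA h by simp
  have 2: "weqK \<alpha> \<beta> (A @ [(j,True),(Suc j,True),(j,True)] @ Bw) (A @ [(Suc j,True),(j,True),(Suc j,True)] @ Bw)"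
    using weq_cong[OF weq_braid[of j \<alpha> \<beta>], of A Bw] vA vB h by simp
  have 3: "weqK \<alpha> \<beta> (A @ [(Suc j,True),(j,True),(Suc j,True)] @ Bw) ((Suc j,True) # A @ [(j,True),(Suc j,True)] @ Bw)"
    using weq_congR[OF weq_sym[OF cA[unfolded commutes_def]], of "[(j,True),(Suc j,True)] @ Bw"] vB h by simp
  show ?thesis unfolding dm using weq_trans[OF weq_trans[OF 1 2] 3] by simp
qed

lemma dl_conj: "1 \<le> fst l \<Longrightarrow> fst l \<le> m \<Longrightarrow> weqK \<alpha> \<beta> (dl m @ [l]) (shl l # dl m)"
proof -
  assume h: "1 \<le> fst l" "fst l \<le> m"
  obtain j e where l: "l = (j,e)" by fastforce
  have p: "weqK \<alpha> \<beta> (dl m @ [(j,True)]) ((Suc j,True) # dl m)" using dl_conj_pos h l by simp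
  show ?thesis
  proof (cases e)
    case True then show ?thesis using p l by (simp add: shl_def)
  next
    case False
    show ?thesis using conj_inv[OF p] h l False by (simp add: shl_def inv_l_def)
  qed
qed

lemma dl_conj_word: "valid_word w \<Longrightarrow> (\<forall>l\<in>set w. fst l \<le> m) \<Longrightarrow>
   weqK \<alpha> \<beta> (dl m @ w @ invw (dl m)) (map shl w)"
proof (induction w)
  case Nil then show ?case using weq_u_invw[of "dl m" \<alpha> \<beta>] by simp
next
  case (Cons l w)
  have 1: "weqK \<alpha> \<beta> ((dl m @ [l]) @ (w @ invw (dl m))) ((shl l # dl m) @ (w @ invw (dl m)))"
    using weq_congR[OF dl_conj[of l m]] Cons.prems by simp
  have IH: "weqK \<alpha> \<beta> (dl m @ w @ invw (dl m)) (map shl w)" using Cons by simp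
  have 2: "weqK \<alpha> \<beta> ([shl l] @ (dl m @ w @ invw (dl m))) ([shl l] @ map shl w)"
    using weq_congL[OF IH, of "[shl l]"] Cons.prems by (simp add: shl_def)
  show ?case using weq_trans[OF 1] 2 by simp
qed

lemma relK_shift: "relK \<alpha> \<beta> L \<Longrightarrow> (\<forall>(c,w)\<in>set L. valid_word w \<and> (\<forall>l\<in>set w. fst l \<le> m)) \<Longrightarrow>
  relK \<alpha> \<beta> (map (\<lambda>(c,w). (c, map shl w)) L)"
proof -
  assume h: "relK \<alpha> \<beta> L" "\<forall>(c,w)\<in>set L. valid_word w \<and> (\<forall>l\<in>set w. fst l \<le> m)"
  have 1: "relK \<alpha> \<beta> (map (\<lambda>(c,w). (c, dl m @ w @ invw (dl m))) L)"
    using relK_mult[OF h(1)] by simp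
  show ?thesis
    apply (rule relK_subst[OF 1])
    apply (rule list_all2_mapI)
    using h(2) dl_conj_word by auto
qed

end

definition invL :: "nat \<Rightarrow> bool \<Rightarrow> ('k::comm_ring_1 \<times> word) list" where
  "invL i e = [(1,[(i,e),(i,\<not>e)]),(-1,[])]"
definition cubL :: "'k::comm_ring_1 \<Rightarrow> 'k \<Rightarrow> nat \<Rightarrow> ('k \<times> word) list" where
  "cubL a b i = [(1,[(i,True),(i,True),(i,True)]),(-a,[(i,True),(i,True)]),(b,[(i,True)]),(-1,[])]"
definition R2L :: "'k::comm_ring_1 \<Rightarrow> 'k \<Rightarrow> nat \<Rightarrow> ('k \<times> word) list" where
  "R2L a b i = [(1,[(i,True),(i,True)]),(-a,[(i,True)]),(b,[]),(-1,[(i,False)])]"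
definition R3L :: "'k::comm_ring_1 \<Rightarrow> 'k \<Rightarrow> nat \<Rightarrow> ('k \<times> word) list" where
  "R3L a b i = [(1,[(i,False),(i,False)]),(-b,[(i,False)]),(a,[]),(-1,[(i,True)])]"

lemmas cert_simps = lc_def tm_def negl_def invL_def cubL_def R2L_def R3L_def

context fixes \<alpha> \<beta> :: "'k::comm_ring_1" begin

lemma relK_invL: "1 \<le> i \<Longrightarrow> relK \<alpha> \<beta> (invL i e)"
  using weq_inv[of "(i,e)" \<alpha> \<beta>] by (simp add: weq_def invL_def inv_l_def)

lemma relK_cub1: "relK \<alpha> \<beta> (cubL \<alpha> \<beta> 1)"
  by (rule gen_relK[OF Kgens.cubic]) (auto simp: lc_def wd_def cubL_def)

lemma relK_cub: "1 \<le> i \<Longrightarrow> relK \<alpha> \<beta> (cubL \<alpha> \<beta> i)"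
proof -
  have "relK \<alpha> \<beta> (cubL \<alpha> \<beta> (Suc n))" for n
  proof (induction n)
    case 0 then show ?case using relK_cub1 by simp
  next
    case (Suc n)
    have "relK \<alpha> \<beta> (map (\<lambda>(c,w). (c, map shl w)) (cubL \<alpha> \<beta> (Suc n)))"
      by (rule relK_shift[OF Suc, where m="Suc n"]) (auto simp: cubL_def)
    then show ?case by (simp add: cubL_def shl_def)
  qed
  moreover assume "1 \<le> i"
  ultimately show ?thesis by (metis Suc_le_D One_nat_def)
qed

lemma relK_R2: "1 \<le> i \<Longrightarrow> relK \<alpha> \<beta> (R2L \<alpha> \<beta> i)"
proof -
  assume i: "1 \<le> i"
  have "relK \<alpha> \<beta> (tm 1 [] (cubL \<alpha> \<beta> i) [(i,False)] @ tm (-1) [(i,True),(i,True)] (invL i True) []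
     @ tm \<alpha> [(i,True)] (invL i True) [] @ tm (-\<beta>) [] (invL i True) [])"
    using i by (intro relK_append relK_tm relK_cub relK_invL) auto
  then show ?thesis
    by (rule relK_lc, intro lc_eqI) (auto simp: cert_simps algebra_simps)
qed

lemma relK_R3: "1 \<le> i \<Longrightarrow> relK \<alpha> \<beta> (R3L \<alpha> \<beta> i)"
proof -
  assume i: "1 \<le> i"
  have "relK \<alpha> \<beta> (tm ((-1)) [(i,True),(i,False),(i,False)] (R2L \<alpha> \<beta> i) [] @ tm ((1)) [] (invL i True) [(i,False),(i,True),(i,True)] @ tm ((-1)*\<alpha>) [] (invL i True) [(i,False),(i,True)] @ tm ((-1)) [] (invL i True) [(i,False),(i,False)] @ tm (\<beta>) [] (invL i True) [(i,False)] @ tm ((1)) [] (invL i False) [(i,True)] @ tm ((-1)*\<alpha>) [] (invL i False) [])"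
    using i by (intro relK_append relK_tm relK_R2 relK_invL) auto
  then show ?thesis
    by (rule relK_lc, intro lc_eqI) (auto simp: cert_simps algebra_simps)
qed

end

definition Plist :: "'k::comm_ring_1 \<Rightarrow> 'k \<Rightarrow> letter \<Rightarrow> letter \<Rightarrow> letter \<Rightarrow> letter \<Rightarrow> ('k \<times> word) list" where
  "Plist \<alpha> \<beta> x xb y yb =
    [ (2*\<alpha> - \<beta>^2, []),
      (-1, [x]), (-1, [y]),
      (-(\<alpha>^2 - \<beta>), [xb]), (-(\<alpha>^2 - \<beta>), [yb]),
      (\<beta>, [x, y]), (\<beta>, [y, x]),
      (\<alpha>, [x, yb]), (\<alpha>, [y, xb]), (\<alpha>, [xb, y]), (\<alpha>, [yb, x]),
      (\<alpha>*\<beta> - 1, [xb, yb]), (\<alpha>*\<beta> - 1, [yb, xb]),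
      (-\<alpha>, [x, y, x]),
      (-1, [xb, y, x]), (-1, [x, yb, x]), (-1, [x, y, xb]),
      (-\<beta>, [xb, yb, x]), (-\<beta>, [x, yb, xb]),
      (\<alpha> - \<beta>^2, [xb, yb, xb]) ]"

lemma Ppoly_lc: "Ppoly a b x xb y yb = lc (Plist a b x xb y yb)"
  by (simp add: Ppoly_def Plist_def)

definition PL :: "'k::comm_ring_1 \<Rightarrow> 'k \<Rightarrow> nat \<Rightarrow> ('k \<times> word) list" where
  "PL a b i = (1,[(Suc i,True),(i,False),(Suc i,True)]) # negl (Plist a b (i,True) (i,False) (Suc i,True) (Suc i,False))"
definition QL :: "'k::comm_ring_1 \<Rightarrow> 'k \<Rightarrow> nat \<Rightarrow> ('k \<times> word) list" where
  "QL a b i = (1,[(Suc i,False),(i,True),(Suc i,False)]) # negl (Plist b a (i,False) (i,True) (Suc i,False) (Suc i,True))"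
definition TLg :: "nat \<Rightarrow> bool \<Rightarrow> bool \<Rightarrow> bool \<Rightarrow> ('k::comm_ring_1 \<times> word) list" where
  "TLg i e1 e2 e3 = [(1,[(Suc i,e1),(i,e2),(Suc i,e3)]),(-1,[(i,e3),(Suc i,e2),(i,e1)])]"

lemma lc_diff: "(\<lambda>w. lc A w - lc B w) = lc (A @ negl B)"
  by (simp add: lc_append lc_negl)

lemmas cert_simps2 = cert_simps PL_def QL_def TLg_def Plist_def

context fixes \<alpha> \<beta> :: "'k::comm_ring_1" begin

lemma relK_TLg: "1 \<le> i \<Longrightarrow> e2 = e1 \<or> e2 = e3 \<Longrightarrow> relK \<alpha> \<beta> (TLg i e1 e2 e3)"
  using weq_triple[of i e2 e1 e3 \<alpha> \<beta>] by (simp add: weq_def TLg_def)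

lemma relK_PL1: "relK \<alpha> \<beta> (PL \<alpha> \<beta> 1)"
proof (rule gen_relK[OF Kgens.prel])
  have "(\<lambda>w. lc [(1, [(2, True), (1, False), (2, True)])] w - lc (Plist \<alpha> \<beta> (1, True) (1, False) (2, True) (2, False)) w)
     = lc ([(1, [(2, True), (1, False), (2, True)])] @ negl (Plist \<alpha> \<beta> (1, True) (1, False) (2, True) (2, False)))"
    by (rule lc_diff)
  then show "(\<lambda>w. wd [(2, True), (1, False), (2, True)] w - Ppoly \<alpha> \<beta> (1, True) (1, False) (2, True) (2, False) w) = lc (PL \<alpha> \<beta> 1)"
    by (simp add: wd_lc[symmetric] Ppoly_lc[symmetric] PL_def numeral_2_eq_2)
qed

lemma relK_PL: "1 \<le> i \<Longrightarrow> relK \<alpha> \<beta> (PL \<alpha> \<beta> i)"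
proof -
  have "relK \<alpha> \<beta> (PL \<alpha> \<beta> (Suc n))" for n
  proof (induction n)
    case 0 then show ?case using relK_PL1 by simp
  next
    case (Suc n)
    have "relK \<alpha> \<beta> (map (\<lambda>(c,w). (c, map shl w)) (PL \<alpha> \<beta> (Suc n)))"
      by (rule relK_shift[OF Suc, where m="Suc (Suc n)"]) (auto simp: PL_def negl_def Plist_def)
    then show ?case by (simp add: PL_def negl_def Plist_def shl_def)
  qed
  moreover assume "1 \<le> i"
  ultimately show ?thesis by (metis Suc_le_D One_nat_def)
qed

lemma relK_QL: "1 \<le> i \<Longrightarrow> relK \<alpha> \<beta> (QL \<alpha> \<beta> i)"
proof -
  assume i: "1 \<le> i"
  have C: "relK \<alpha> \<beta> (tm ((-1)) [] (R2L \<alpha> \<beta> (Suc i)) [(i,True),(Suc i,False)] @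
  tm ((1)) [(Suc i,True)] (TLg i True True False) [] @
  tm ((1)) [] (PL \<alpha> \<beta> i) [(i,True)] @
  tm ((-1)*\<alpha>) [(i,True),(Suc i,True)] (R2L \<alpha> \<beta> i) [] @
  tm ((-1)) [(i,True),(Suc i,True)] (invL i False) [] @
  tm ((-1)) [(i,True),(Suc i,False)] (R2L \<alpha> \<beta> i) [] @
  tm ((-1)*\<beta>) [(i,True),(Suc i,False)] (invL i False) [] @
  tm ((-1)) [(i,False),(Suc i,True)] (R2L \<alpha> \<beta> i) [] @
  tm ((-1)*\<beta>) [(i,False),(Suc i,False)] (R2L \<alpha> \<beta> i) [] @
  tm ((-1)*\<beta>^2 + \<alpha>) [(i,False),(Suc i,False)] (invL i False) [] @
  tm ((-1)*\<alpha>) [] (TLg i True True False) [] @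
  tm (\<beta>) [(Suc i,True)] (R2L \<alpha> \<beta> i) [] @
  tm (\<alpha>) [(Suc i,True)] (invL i False) [] @
  tm (\<alpha>) [(Suc i,False)] (R2L \<alpha> \<beta> i) [] @
  tm ((-1) + \<alpha>*\<beta>) [(Suc i,False)] (invL i False) [] @
  tm ((-1)) [] (R2L \<alpha> \<beta> i) [] @
  tm (\<beta> + (-1)*\<alpha>^2) [] (invL i False) [])"
    using i by (intro relK_append relK_tm relK_R2 relK_invL relK_PL relK_TLg) auto
  show ?thesis
    apply (rule relK_lc[OF C])
    apply (rule lc_eqI2)
    apply (simp add: cert_simps2 power2_eq_square)
    done
qed

end

lemma wt_Nil[simp]: "wt [] = 0" by (simp add: wt_def)
lemma wt_Cons[simp]: "wt (l # u) = fst l + wt u" by (simp add: wt_def)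
lemma wt_append[simp]: "wt (u @ v) = wt u + wt v" by (simp add: wt_def)

definition good_list :: "('k \<times> word) list \<Rightarrow> nat \<Rightarrow> bool" where
  "good_list L n \<longleftrightarrow> (\<forall>x\<in>set L. valid_word (snd x) \<and> wt (snd x) < n)"

lemma good_list_append[simp]: "good_list (A @ B) n \<longleftrightarrow> good_list A n \<and> good_list B n"
  by (auto simp: good_list_def)
lemma good_list_Cons[simp]: "good_list (x # B) n \<longleftrightarrow> valid_word (snd x) \<and> wt (snd x) < n \<and> good_list B n"
  by (auto simp: good_list_def)
lemma good_list_Nil[simp]: "good_list [] n"
  by (auto simp: good_list_def)

context fixes \<alpha> \<beta> :: "'k::comm_ring_1" begin

lemma triple_lemma: "1 \<le> i \<Longrightarrow> \<exists>L. triple_rep \<alpha> \<beta> i e1 e2 e3 = lc L \<and>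
   relK \<alpha> \<beta> ((1,[(Suc i,e1),(i,e2),(Suc i,e3)]) # negl L) \<and> good_list L (3*i+2)"
proof -
  assume i: "1 \<le> i"
  show ?thesis
  proof (cases "e2 = e1 \<or> e2 = e3")
    case True
    show ?thesis
      apply (rule exI[of _ "[(1,[(i,e3),(Suc i,e2),(i,e1)])]"])
      using True i relK_TLg[OF i True, where \<alpha>=\<alpha> and \<beta>=\<beta>]
      by (simp add: triple_rep_def wd_lc TLg_def negl_def)
  next
    case False
    then have f: "e2 = (\<not> e1)" "e3 = e1" by auto
    show ?thesis
    proof (cases e1)
      case True
      show ?thesis
        apply (rule exI[of _ "Plist \<alpha> \<beta> (i,True) (i,False) (Suc i,True) (Suc i,False)"])
        using True f i relK_PL[OF i, where \<alpha>=\<alpha> and \<beta>=\<beta>]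
        by (simp add: triple_rep_def Ppoly_lc PL_def Plist_def)
    next
      case False
      show ?thesis
        apply (rule exI[of _ "Plist \<beta> \<alpha> (i,False) (i,True) (Suc i,False) (Suc i,True)"])
        using False f i relK_QL[OF i, where \<alpha>=\<alpha> and \<beta>=\<beta>]
        by (simp add: triple_rep_def Ppoly_lc Qpoly_def QL_def Plist_def)
    qed
  qed
qed

lemma good_list_map_app: "good_list L n \<Longrightarrow> valid_word W \<Longrightarrow> good_list (map (\<lambda>(c,w). (c, w@W)) L) (n + wt W)"
  by (auto simp: good_list_def)

lemma basic_rel: "basic_rep \<alpha> \<beta> t U V \<Longrightarrow> valid_word U \<and> (\<exists>L. V = lc L \<and> relK \<alpha> \<beta> ((1,U) # negl L) \<and>
   (t \<noteq> Rviii \<longrightarrow> good_list L (wt U)) \<and>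
   (t = Rviii \<longrightarrow> (\<exists>i j e1 e2. 1 \<le> i \<and> Suc i < j \<and> U = [(j,e1),(i,e2)] \<and> L = [(1,[(i,e2),(j,e1)])])))"
proof (induction rule: basic_rep.induct)
  case (r1a i)
  show ?case using r1a relK_invL[OF r1a, where \<alpha>=\<alpha> and \<beta>=\<beta> and e=True]
    by (auto simp: wd_lc invL_def negl_def intro!: exI[of _ "[(1,[])]"])
next
  case (r1b i)
  show ?case using r1b relK_invL[OF r1b, where \<alpha>=\<alpha> and \<beta>=\<beta> and e=False]
    by (auto simp: wd_lc invL_def negl_def intro!: exI[of _ "[(1,[])]"])
next
  case (r2 i)
  have "relK \<alpha> \<beta> ((1, [(i, True), (i, True)]) # negl [(\<alpha>, [(i, True)]), (- \<beta>, []), (1, [(i, False)])])"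
    using relK_R2[OF r2, where \<alpha>=\<alpha> and \<beta>=\<beta>] by (simp add: R2L_def negl_def)
  then show ?case using r2 by auto
next
  case (r3 i)
  have "relK \<alpha> \<beta> ((1, [(i, False), (i, False)]) # negl [(\<beta>, [(i, False)]), (- \<alpha>, []), (1, [(i, True)])])"
    using relK_R3[OF r3, where \<alpha>=\<alpha> and \<beta>=\<beta>] by (simp add: R3L_def negl_def)
  then show ?case using r3 by auto
next
  case (r456 i e1 e2 e3)
  obtain L where L: "triple_rep \<alpha> \<beta> i e1 e2 e3 = lc L"
    "relK \<alpha> \<beta> ((1,[(Suc i,e1),(i,e2),(Suc i,e3)]) # negl L)" "good_list L (3*i+2)"
    using triple_lemma[OF r456] by blast
  have "triple_type e1 e2 e3 \<noteq> Rviii" by (simp add: triple_type_def)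
  moreover have e: "wt [(Suc i,e1),(i,e2),(Suc i,e3)] = 3*i+2" by simp
  moreover have "good_list L (wt [(Suc i,e1),(i,e2),(Suc i,e3)])" using L(3) e by metis
  ultimately show ?case using L r456 by (auto intro!: exI[of _ L])
next
  case (r7 i W e1 e2 e3)
  obtain L where L: "triple_rep \<alpha> \<beta> i e1 e2 e3 = lc L"
    "relK \<alpha> \<beta> ((1,[(Suc i,e1),(i,e2),(Suc i,e3)]) # negl L)" "good_list L (3*i+2)"
    using triple_lemma[OF r7(1)] by blast
  have vW: "valid_word W" using r7(2) by (auto simp: valid_word_def)
  have 1: "relK \<alpha> \<beta> (tm 1 [] ((1,[(Suc i,e1),(i,e2),(Suc i,e3)]) # negl L) W)"
    using relK_tm[OF L(2)] vW by simp
  have cW: "commutes \<alpha> \<beta> [(Suc i,e3)] W"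
    by (rule commutes_list) (use r7 in \<open>auto simp: far_def\<close>)
  have w1: "weqK \<alpha> \<beta> ([(Suc i,e1),(i,e2)] @ ([(Suc i,e3)] @ W)) ([(Suc i,e1),(i,e2)] @ (W @ [(Suc i,e3)]))"
    using weq_congL[OF cW[unfolded commutes_def], of "[(Suc i,e1),(i,e2)]"] r7(1) by simp
  have 2: "relK \<alpha> \<beta> ((1, [(Suc i,e1),(i,e2)] @ W @ [(Suc i,e3)]) # negl (map (\<lambda>(c,w). (c, w@W)) L))"
    apply (rule relK_subst[OF 1])
    using w1 by (auto simp: tm_def negl_def list.rel_map intro!: list.rel_refl weq_refl)
  have 3: "emult (triple_rep \<alpha> \<beta> i e1 e2 e3) (wd W) = lc (map (\<lambda>(c,w). (c, w@W)) L)"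
    by (simp add: L(1) emult_wd_lc_right)
  have 4: "good_list (map (\<lambda>(c,w). (c, w@W)) L) (wt ([(Suc i,e1),(i,e2)] @ W @ [(Suc i,e3)]))"
  proof -
    have "wt ([(Suc i,e1),(i,e2)] @ W @ [(Suc i,e3)]) = 3*i+2 + wt W" by simp
    then show ?thesis using good_list_map_app[OF L(3) vW] by metis
  qed
  show ?case using 2 3 4 vW r7(1) by (auto intro!: exI[of _ "map (\<lambda>(c,w). (c, w@W)) L"])
next
  case (r8 i j e1 e2)
  have "relK \<alpha> \<beta> [(1,[(j,e1),(i,e2)]),(-1,[(i,e2),(j,e1)])]"
    using weq_far_swap[OF r8, of \<alpha> \<beta> e1 e2] by (simp add: weq_def)
  then show ?case using r8 by (auto simp: wd_lc negl_def intro!: exI[of _ "[(1,[(i,e2),(j,e1)])]"])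
qed

end

lemma wtp_Nil[simp]: "wtp [] = 0" by (simp add: wtp_def)
lemma wtp_Cons[simp]: "wtp (l # v) = fst l + wtp v + wt v"
proof -
  have "wtp (l # v) = (\<Sum>j<Suc (length v). (j + 1) * fst ((l # v) ! j))" by (simp add: wtp_def)
  also have "\<dots> = fst l + (\<Sum>j<length v. (j + 2) * fst (v ! j))"
    by (subst sum.lessThan_Suc_shift) simp
  also have "(\<Sum>j<length v. (j + 2) * fst (v ! j)) = (\<Sum>j<length v. (j + 1) * fst (v ! j)) + (\<Sum>j<length v. fst (v ! j))"
    by (simp add: sum.distrib[symmetric] algebra_simps)
  also have "(\<Sum>j<length v. fst (v ! j)) = wt v"
    by (induction v) (simp_all add: wt_def sum.lessThan_Suc_shift del: sum.lessThan_Suc)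
  finally have "wtp (l # v) = fst l + ((\<Sum>j<length v. (j + 1) * fst (v ! j)) + wt v)" .
  moreover have "wtp v = (\<Sum>j<length v. (j + 1) * fst (v ! j))" by (simp add: wtp_def)
  ultimately show ?thesis by linarith
qed
lemma wtp_append[simp]: "wtp (u @ v) = wtp u + wtp v + length u * wt v"
  by (induction u) (simp_all add: algebra_simps)

lemma basic_rep_nonempty: "basic_rep a b t U V \<Longrightarrow> U \<noteq> []"
  by (induction rule: basic_rep.induct) auto

lemma valid_wt_pos: "valid_word U \<Longrightarrow> U \<noteq> [] \<Longrightarrow> 1 \<le> wt U"
  by (cases U) auto

lemma in_kF_valid: "in_kF X \<Longrightarrow> X w \<noteq> 0 \<Longrightarrow> valid_word w"
  by (simp add: in_kF_def)

lemma wt_elt_ge: "in_kF X \<Longrightarrow> X w \<noteq> 0 \<Longrightarrow> wt w \<le> wt_elt X"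
  unfolding wt_elt_def in_kF_def by (intro Max_ge) auto

lemma wt_elt_le: "(\<And>w. X w \<noteq> 0 \<Longrightarrow> wt w \<le> N) \<Longrightarrow> wt_elt X \<le> N"
proof -
  assume h: "\<And>w. X w \<noteq> 0 \<Longrightarrow> wt w \<le> N"
  have sub: "\<forall>x \<in> insert 0 (wt ` {w. X w \<noteq> 0}). x \<le> N"
  proof
    fix x assume "x \<in> insert 0 (wt ` {w. X w \<noteq> 0})"
    then show "x \<le> N"
    proof
      assume "x = 0" then show ?thesis by simp
    next
      assume "x \<in> wt ` {w. X w \<noteq> 0}"
      then obtain w where "X w \<noteq> 0" "x = wt w" by blast
      then show ?thesis using h by blast
    qed
  qed
  have fin: "finite (insert 0 (wt ` {w. X w \<noteq> 0}))"
    using sub finite_nat_set_iff_bounded_le by blast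
  show ?thesis unfolding wt_elt_def
    by (rule Max.boundedI[OF fin]) (use sub in auto)
qed

lemma wt_elt_wd: "wt_elt (wd Y) = wt Y"
proof -
  have "{w. wd Y w \<noteq> (0::'a::comm_ring_1)} = {Y}" by (auto simp: wd_def)
  then show ?thesis by (simp add: wt_elt_def)
qed

lemma wtp_swap: "i < j \<Longrightarrow> wtp (C @ [(j,e1),(i,e2)] @ D) < wtp (C @ [(i,e2),(j,e1)] @ D)"
  by (simp add: algebra_simps)

definition red_res :: "'k::comm_ring_1 \<Rightarrow> 'k \<Rightarrow> rtype \<Rightarrow> word \<Rightarrow> ('k \<times> word) list \<Rightarrow> bool" where
  "red_res a b t W L \<longleftrightarrow> relK a b ((1,W) # negl L) \<and>
   (t \<noteq> Rviii \<longrightarrow> good_list L (wt W)) \<and>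
   (t = Rviii \<longrightarrow> (\<exists>Y. L = [(1,Y)] \<and> valid_word Y \<and> wt Y = wt W \<and> wtp W < wtp Y))"

context fixes \<alpha> \<beta> :: "'k::comm_ring_1" begin

lemma ewr: "valid_word W \<Longrightarrow> elem_red_word \<alpha> \<beta> t W X' \<Longrightarrow> 1 \<le> wt W \<and> (\<exists>L. X' = lc L \<and> red_res \<alpha> \<beta> t W L)"
proof -
  assume vW: "valid_word W" and e: "elem_red_word \<alpha> \<beta> t W X'"
  obtain C U V D where W: "W = C @ U @ D" and b: "basic_rep \<alpha> \<beta> t U V" and X': "X' = emult (emult (wd C) V) (wd D)"
    using e unfolding elem_red_word_def by blast
  have vC: "valid_word C" "valid_word D" "valid_word U" using vW W by auto
  obtain L0 where L0: "V = lc L0" "relK \<alpha> \<beta> ((1,U) # negl L0)" "t \<noteq> Rviii \<longrightarrow> good_list L0 (wt U)"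
     "t = Rviii \<longrightarrow> (\<exists>i j e1 e2. 1 \<le> i \<and> Suc i < j \<and> U = [(j,e1),(i,e2)] \<and> L0 = [(1,[(i,e2),(j,e1)])])"
    using basic_rel[OF b] by blast
  define L where "L = map (\<lambda>(c,w). (c, C@w@D)) L0"
  have 1: "X' = lc L" unfolding X' L0(1) L_def
    by (simp add: emult_wd_lc_left emult_wd_lc_right comp_def split_def)
  have 2: "relK \<alpha> \<beta> ((1,W) # negl L)"
    using relK_mult[OF L0(2) vC(1) vC(2)] W by (simp add: L_def negl_def comp_def split_def)
  have 3: "t \<noteq> Rviii \<longrightarrow> good_list L (wt W)"
    using L0(3) vC W unfolding L_def good_list_def by auto
  have 4: "t = Rviii \<longrightarrow> (\<exists>Y. L = [(1,Y)] \<and> valid_word Y \<and> wt Y = wt W \<and> wtp W < wtp Y)"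
  proof
    assume "t = Rviii"
    then obtain i j e1 e2 where ij: "1 \<le> i" "Suc i < j" "U = [(j,e1),(i,e2)]" "L0 = [(1,[(i,e2),(j,e1)])]"
      using L0(4) by blast
    show "\<exists>Y. L = [(1,Y)] \<and> valid_word Y \<and> wt Y = wt W \<and> wtp W < wtp Y"
      using ij vC W wtp_swap[of i j C e1 e2 D] by (auto simp: L_def)
  qed
  have 5: "1 \<le> wt W" using valid_wt_pos[OF vC(3) basic_rep_nonempty[OF b]] W by simp
  have "red_res \<alpha> \<beta> t W L" unfolding red_res_def using 2 3 4 by (intro conjI)
  then show ?thesis using 1 5 by blast
qed

lemma partA1: "in_kF X \<Longrightarrow> elem_red \<alpha> \<beta> X X' \<Longrightarrow> pi_eq \<alpha> \<beta> X X' \<and> wt_elt X' \<le> wt_elt X"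
proof -
  assume kX: "in_kF X" and e: "elem_red \<alpha> \<beta> X X'"
  obtain W W' t where W: "X W \<noteq> 0" "elem_red_word \<alpha> \<beta> t W W'"
    and X': "X' = (\<lambda>w. X w - (if w = W then X W else 0) + X W * W' w)"
    using e unfolding elem_red_def by blast
  have vW: "valid_word W" using in_kF_valid[OF kX W(1)] .
  obtain L where L: "W' = lc L" "relK \<alpha> \<beta> ((1,W) # negl L)"
    "t \<noteq> Rviii \<longrightarrow> good_list L (wt W)"
    "t = Rviii \<longrightarrow> (\<exists>Y. L = [(1,Y)] \<and> valid_word Y \<and> wt Y = wt W \<and> wtp W < wtp Y)"
    using ewr[OF vW W(2)] unfolding red_res_def by blast
  have pi: "pi_eq \<alpha> \<beta> X X'"
  proof -
    have "(\<lambda>w. X W * lc ((1,W) # negl L) w) \<in> Kideal \<alpha> \<beta>"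
      using L(2) by (simp add: relK_def Kideal.smult)
    moreover have "(\<lambda>w. X W * lc ((1,W) # negl L) w) = (\<lambda>w. X w - X' w)"
      by (rule ext) (simp add: X' L(1) lc_Cons lc_negl algebra_simps)
    ultimately show ?thesis by (simp add: pi_eq_def)
  qed
  have wW: "wt W \<le> wt_elt X" using wt_elt_ge[OF kX W(1)] .
  have Lw: "lc L w \<noteq> 0 \<Longrightarrow> wt w \<le> wt W" for w
  proof -
    assume "lc L w \<noteq> 0"
    then have "w \<in> snd ` set L" by (rule lc_zero_notin)
    then show ?thesis using L(3) L(4) by (cases "t = Rviii") (auto simp: good_list_def less_imp_le)
  qed
  have "wt_elt X' \<le> wt_elt X"
  proof (rule wt_elt_le)
    fix w assume "X' w \<noteq> 0"
    then have "X w \<noteq> 0 \<or> lc L w \<noteq> 0" by (auto simp: X' L(1) split: if_splits)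
    then show "wt w \<le> wt_elt X" using wt_elt_ge[OF kX] Lw wW by fastforce
  qed
  then show ?thesis using pi by blast
qed

lemma partA2: "valid_word W \<Longrightarrow> elem_red_word \<alpha> \<beta> t W X' \<Longrightarrow>
   ((wt_elt X' = wt W \<longleftrightarrow> t = Rviii) \<and> (t = Rviii \<longrightarrow> (\<exists>Y. X' = wd Y \<and> wtp W < wtp Y)))"
proof -
  assume vW: "valid_word W" and e: "elem_red_word \<alpha> \<beta> t W X'"
  obtain L where L: "X' = lc L" "t \<noteq> Rviii \<longrightarrow> good_list L (wt W)"
    "t = Rviii \<longrightarrow> (\<exists>Y. L = [(1,Y)] \<and> valid_word Y \<and> wt Y = wt W \<and> wtp W < wtp Y)"
    and pos: "1 \<le> wt W"
    using ewr[OF vW e] unfolding red_res_def by blast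
  show ?thesis
  proof (cases "t = Rviii")
    case True
    then obtain Y where Y: "L = [(1,Y)]" "wt Y = wt W" "wtp W < wtp Y" using L(3) by blast
    have "X' = wd Y" using Y L(1) by (simp add: wd_lc)
    then show ?thesis using Y True by (auto simp: wt_elt_wd)
  next
    case False
    have "wt_elt X' \<le> wt W - 1"
    proof (rule wt_elt_le)
      fix w assume "X' w \<noteq> 0"
      then have "w \<in> snd ` set L" using L(1) lc_zero_notin by metis
      then show "wt w \<le> wt W - 1" using L(2) False by (auto simp: good_list_def)
    qed
    then show ?thesis using False pos by auto
  qed
qed

end

definition reducible :: "'k::comm_ring_1 \<Rightarrow> 'k \<Rightarrow> word \<Rightarrow> bool" where
  "reducible a b w \<longleftrightarrow> (\<exists>C U D t V. w = C @ U @ D \<and> basic_rep a b t U V)"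

definition PAT :: "word \<Rightarrow> letter \<Rightarrow> bool" where
  "PAT w l \<longleftrightarrow> (w \<noteq> [] \<and> fst (last w) = fst l) \<or> (w \<noteq> [] \<and> fst l + 1 < fst (last w)) \<or>
     (\<exists>u i e1 e2 W. w = u @ [(Suc i,e1),(i,e2)] @ W \<and> fst l = Suc i \<and> 1 \<le> i \<and> (\<forall>m\<in>set W. 1 \<le> fst m \<and> fst m < i))"

lemma basic_rep_nonempty': "basic_rep a b t U V \<Longrightarrow> U \<noteq> []"
  by (induction rule: basic_rep.induct) auto

lemma snoc2: "w @ [l] = C @ [a, b] \<Longrightarrow> w = C @ [a] \<and> l = b"
proof -
  assume "w @ [l] = C @ [a, b]"
  then have "w @ [l] = (C @ [a]) @ [b]" by simp
  then show ?thesis using append1_eq_conv by blast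
qed

lemma snoc3: "w @ [l] = C @ (x # y # W @ [z]) \<Longrightarrow> w = C @ [x, y] @ W \<and> l = z"
proof -
  assume "w @ [l] = C @ (x # y # W @ [z])"
  then have "w @ [l] = (C @ [x, y] @ W) @ [z]" by simp
  then show ?thesis using append1_eq_conv by blast
qed

lemma PAT1: "w = w' @ [(i,e)] \<Longrightarrow> fst l = i \<Longrightarrow> PAT w l"
  unfolding PAT_def by simp
lemma PAT2: "w = w' @ [(j,f)] \<Longrightarrow> fst l + 1 < j \<Longrightarrow> PAT w l"
  unfolding PAT_def by simp
lemma PAT3: "w = u @ [(Suc i,e1),(i,e2)] @ W \<Longrightarrow> fst l = Suc i \<Longrightarrow> 1 \<le> i \<Longrightarrow>
   (\<forall>m\<in>set W. 1 \<le> fst m \<and> fst m < i) \<Longrightarrow> PAT w l"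
  unfolding PAT_def by (intro disjI2) (rule exI[of _ u], rule exI[of _ i], rule exI[of _ e1], rule exI[of _ e2], rule exI[of _ W], simp)

lemma reducible_snoc: "valid_word (w @ [l]) \<Longrightarrow> reducible a b (w @ [l]) \<longleftrightarrow> reducible a b w \<or> PAT w l"
proof
  assume v: "valid_word (w @ [l])" and r: "reducible a b (w @ [l])"
  then obtain C U D t V where e: "w @ [l] = C @ U @ D" and br: "basic_rep a b t U V"
    unfolding reducible_def by blast
  show "reducible a b w \<or> PAT w l"
  proof (cases "D = []")
    case False
    then obtain D' l' where D: "D = D' @ [l']" by (metis rev_exhaust)
    then have "w = C @ U @ D'" using e by simp
    then show ?thesis using br unfolding reducible_def by blast
  next
    case True
    then have e2: "w @ [l] = C @ U" using e by simp
    from br show ?thesis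
    proof (cases rule: basic_rep.cases)
      case (r1a i)
      then have "w = C @ [(i,True)] \<and> l = (i,False)" using snoc2[of w l C "(i,True)" "(i,False)"] e2 by simp
      then show ?thesis by (intro disjI2 PAT1[of w C i True]) simp_all
    next
      case (r1b i)
      then have "w = C @ [(i,False)] \<and> l = (i,True)" using snoc2[of w l C "(i,False)" "(i,True)"] e2 by simp
      then show ?thesis by (intro disjI2 PAT1[of w C i False]) simp_all
    next
      case (r2 i)
      then have "w = C @ [(i,True)] \<and> l = (i,True)" using snoc2[of w l C "(i,True)" "(i,True)"] e2 by simp
      then show ?thesis by (intro disjI2 PAT1[of w C i True]) simp_all
    next
      case (r3 i)
      then have "w = C @ [(i,False)] \<and> l = (i,False)" using snoc2[of w l C "(i,False)" "(i,False)"] e2 by simp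
      then show ?thesis by (intro disjI2 PAT1[of w C i False]) simp_all
    next
      case (r456 i e1 e2' e3)
      then have "w = C @ [(Suc i,e1),(i,e2')] @ [] \<and> fst l = Suc i" using e2 snoc3[of w l C "(Suc i,e1)" "(i,e2')" "[]" "(Suc i,e3)"] by simp
      then show ?thesis using r456 by (intro disjI2 PAT3[of w C i e1 e2' "[]"]) simp_all
    next
      case (r7 i W e1 e2' e3)
      then have "w = C @ [(Suc i,e1),(i,e2')] @ W \<and> fst l = Suc i" using e2 snoc3[of w l C "(Suc i,e1)" "(i,e2')" W "(Suc i,e3)"] by simp
      then show ?thesis using r7 by (intro disjI2 PAT3[of w C i e1 e2' W]) simp_all
    next
      case (r8 i j e1 e2')
      then have "w = C @ [(j,e1)] \<and> l = (i,e2')" using snoc2[of w l C "(j,e1)" "(i,e2')"] e2 by simp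
      then show ?thesis using r8 by (intro disjI2 PAT2[of w C j e1]) simp_all
    qed
  qed
next
  assume v: "valid_word (w @ [l])" and h: "reducible a b w \<or> PAT w l"
  show "reducible a b (w @ [l])"
  proof (cases "reducible a b w")
    case True
    then obtain C U D t V where "w = C @ U @ D" "basic_rep a b t U V" unfolding reducible_def by blast
    then have "w @ [l] = C @ U @ (D @ [l])" "basic_rep a b t U V" by auto
    then show ?thesis unfolding reducible_def by blast
  next
    case False
    then have p: "PAT w l" using h by blast
    have vl: "1 \<le> fst l" using v by simp
    obtain i e where l: "l = (i,e)" by fastforce
    show ?thesis
    proof (cases "w \<noteq> [] \<and> fst (last w) = fst l")
      case True
      then obtain w' f where w: "w = w' @ [(i,f)]" using l by (metis append_butlast_last_id prod.collapse fst_conv)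
      have "\<exists>t V. basic_rep a b t [(i,f),(i,e)] V"
      proof (cases e; cases f)
        assume "e" "f" then show ?thesis using basic_rep.r2[of i a b] vl l by auto
      next
        assume "e" "\<not> f" then show ?thesis using basic_rep.r1b[of i a b] vl l by auto
      next
        assume "\<not> e" "f" then show ?thesis using basic_rep.r1a[of i a b] vl l by auto
      next
        assume "\<not> e" "\<not> f" then show ?thesis using basic_rep.r3[of i a b] vl l by auto
      qed
      then show ?thesis unfolding reducible_def using w l by (metis append.assoc append_Cons append_Nil append_Nil2)
    next
      case c1: False
      show ?thesis
      proof (cases "w \<noteq> [] \<and> fst l + 1 < fst (last w)")
        case True
        then obtain w' j f where w: "w = w' @ [(j,f)]" "i + 1 < j" using l by (metis append_butlast_last_id prod.collapse fst_conv)
        have "basic_rep a b Rviii [(j,f),(i,e)] (wd [(i,e),(j,f)])"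
          using vl l w by (intro basic_rep.r8) auto
        then show ?thesis unfolding reducible_def using w l by (metis append.assoc append_Cons append_Nil append_Nil2)
      next
        case False
        then obtain u k e1 e2 W where w: "w = u @ [(Suc k,e1),(k,e2)] @ W" "fst l = Suc k" "1 \<le> k"
            "\<forall>m\<in>set W. 1 \<le> fst m \<and> fst m < k"
          using p c1 unfolding PAT_def by blast
        have "basic_rep a b Rvii ([(Suc k,e1),(k,e2)] @ W @ [(Suc k,e)]) (emult (triple_rep a b k e1 e2 e) (wd W))"
          using w by (intro basic_rep.r7) auto
        moreover have "w @ [l] = u @ ([(Suc k,e1),(k,e2)] @ W @ [(Suc k,e)]) @ []" using w l by simp
        ultimately show ?thesis unfolding reducible_def by blast
      qed
    qed
  qed
qed

fun maxi :: "word \<Rightarrow> nat" where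
  "maxi [] = 0" | "maxi (l # w) = max (fst l) (maxi w)"

lemma maxi_snoc[simp]: "maxi (w @ [l]) = max (maxi w) (fst l)" by (induction w) auto
lemma maxi_ge: "l \<in> set w \<Longrightarrow> fst l \<le> maxi w" by (induction w) auto

definition ext :: "word \<Rightarrow> letter \<Rightarrow> bool" where
  "ext w l \<longleftrightarrow> (w \<noteq> [] \<and> fst l + 1 = fst (last w)) \<or> maxi w < fst l"

definition ok :: "word \<Rightarrow> bool" where
  "ok w \<longleftrightarrow> (\<forall>k<length w. 1 \<le> fst (w!k) \<and> ext (take k w) (w!k))"

lemma ok_Nil[simp]: "ok []" by (simp add: ok_def)

lemma ok_snoc: "ok (w @ [l]) \<longleftrightarrow> ok w \<and> 1 \<le> fst l \<and> ext w l"
proof -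
  have "ok (w @ [l]) \<longleftrightarrow> (\<forall>k<Suc (length w). 1 \<le> fst ((w @ [l])!k) \<and> ext (take k (w @ [l])) ((w @ [l])!k))"
    by (simp add: ok_def)
  also have "\<dots> \<longleftrightarrow> (\<forall>k<length w. 1 \<le> fst ((w @ [l])!k) \<and> ext (take k (w @ [l])) ((w @ [l])!k)) \<and>
        (1 \<le> fst ((w @ [l])!length w) \<and> ext (take (length w) (w @ [l])) ((w @ [l])!length w))"
    by (simp add: less_Suc_eq conj_commute) (auto simp: less_Suc_eq)
  also have "\<dots> \<longleftrightarrow> ok w \<and> 1 \<le> fst l \<and> ext w l"
    by (simp add: ok_def nth_append)
  finally show ?thesis .
qed

lemma ok_valid: "ok w \<Longrightarrow> valid_word w"
  by (induction w rule: rev_induct) (auto simp: ok_snoc)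

lemma ok_prefix: "ok (w @ [l]) \<Longrightarrow> ok w" by (simp add: ok_snoc)

lemma run_lemma: "ok w \<Longrightarrow> w \<noteq> [] \<Longrightarrow> fst (last w) \<le> i \<Longrightarrow> Suc i \<le> maxi w \<Longrightarrow>
  \<exists>u e1 e2 W. w = u @ [(Suc i,e1),(i,e2)] @ W \<and> (\<forall>m\<in>set W. fst (last w) \<le> fst m \<and> fst m < i)"
proof (induction w rule: rev_induct)
  case Nil then show ?case by simp
next
  case (snoc l w)
  have okw: "ok w" "1 \<le> fst l" "ext w l" using snoc.prems(1) by (auto simp: ok_snoc)
  show ?case
  proof (cases "w \<noteq> [] \<and> fst l + 1 = fst (last w)")
    case True
    have mx: "maxi (w @ [l]) = maxi w" using True maxi_ge[of "last w" w] by auto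
    show ?thesis
    proof (cases "fst l = i")
      case True2: True
      have lw: "last w = (Suc i, snd (last w))" using True True2 by (metis Suc_eq_plus1 prod.collapse)
      have ll: "l = (i, snd l)" using True2 by (metis prod.collapse)
      have "w @ [l] = butlast w @ [(Suc i, snd (last w)), (i, snd l)] @ []"
        using True lw ll by (metis append_butlast_last_id append.assoc append_Cons append_Nil append_Nil2)
      then show ?thesis by (intro exI[of _ "butlast w"] exI[of _ "snd (last w)"] exI[of _ "snd l"] exI[of _ "[]"]) simp
    next
      case False
      have "fst (last w) \<le> i" using snoc.prems(3) False True by simp
      moreover have "Suc i \<le> maxi w" using snoc.prems(4) mx by simp
      ultimately obtain u e1 e2 W where uw: "w = u @ [(Suc i,e1),(i,e2)] @ W"
          "\<forall>m\<in>set W. fst (last w) \<le> fst m \<and> fst m < i"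
        using snoc.IH okw True by blast
      have "w @ [l] = u @ [(Suc i,e1),(i,e2)] @ (W @ [l])" using uw by simp
      moreover have "\<forall>m\<in>set (W @ [l]). fst (last (w @ [l])) \<le> fst m \<and> fst m < i"
        using uw(2) True False snoc.prems(3) by auto
      ultimately show ?thesis by blast
    qed
  next
    case False
    then have "maxi w < fst l" using okw(3) unfolding ext_def by auto
    then show ?thesis using snoc.prems by simp
  qed
qed

lemma notPAT_iff: "ok w \<Longrightarrow> 1 \<le> fst l \<Longrightarrow> (\<not> PAT w l \<longleftrightarrow> ext w l)"
proof
  assume ok: "ok w" and l1: "1 \<le> fst l" and np: "\<not> PAT w l"
  show "ext w l"
  proof (rule ccontr)
    assume ne: "\<not> ext w l"
    then have wne: "w \<noteq> []" using l1 by (auto simp: ext_def)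
    have le: "fst l \<le> maxi w" and nj: "fst l + 1 \<noteq> fst (last w)" using ne wne by (auto simp: ext_def)
    have n1: "fst (last w) \<noteq> fst l" using np wne by (auto simp: PAT_def)
    have n2: "\<not> fst l + 1 < fst (last w)" using np wne by (auto simp: PAT_def)
    have gt: "fst (last w) < fst l" using n1 n2 nj by linarith
    define i where "i = fst l - 1"
    have i: "fst l = Suc i" "fst (last w) \<le> i" "Suc i \<le> maxi w" using gt le by (auto simp: i_def)
    obtain u e1 e2 W where uw: "w = u @ [(Suc i,e1),(i,e2)] @ W" "\<forall>m\<in>set W. fst (last w) \<le> fst m \<and> fst m < i"
      using run_lemma[OF ok wne i(2) i(3)] by blast
    have "1 \<le> fst (last w)" using ok_valid[OF ok] wne by (auto simp: valid_word_def)
    then have "1 \<le> i" "\<forall>m\<in>set W. 1 \<le> fst m \<and> fst m < i" using i uw(2) by auto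
    then have "PAT w l" using PAT3[OF uw(1) i(1)] by blast
    then show False using np by blast
  qed
next
  assume ok: "ok w" and l1: "1 \<le> fst l" and e: "ext w l"
  show "\<not> PAT w l"
  proof
    assume p: "PAT w l"
    show False
    proof (cases "w \<noteq> [] \<and> fst l + 1 = fst (last w)")
      case True
      have c1: "\<not> (w \<noteq> [] \<and> fst (last w) = fst l)" using True by auto
      have c2: "\<not> (w \<noteq> [] \<and> fst l + 1 < fst (last w))" using True by auto
      obtain u i e1 e2 W where uw: "w = u @ [(Suc i,e1),(i,e2)] @ W" "fst l = Suc i"
          "\<forall>m\<in>set W. 1 \<le> fst m \<and> fst m < i"
        using p c1 c2 unfolding PAT_def by blast
      show False
      proof (cases "W = []")
        case True
        then have "last w = (i,e2)" using uw(1) by simp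
        then show False using uw(2) \<open>w \<noteq> [] \<and> fst l + 1 = fst (last w)\<close> by simp
      next
        case False
        then have "last w \<in> set W" using uw(1) by simp
        then show False using uw(2) uw(3) \<open>w \<noteq> [] \<and> fst l + 1 = fst (last w)\<close> by fastforce
      qed
    next
      case False
      then have mx: "maxi w < fst l" using e unfolding ext_def by auto
      show False using p unfolding PAT_def
      proof (elim disjE conjE exE)
        assume "w \<noteq> []" "fst (last w) = fst l"
        then show False using mx maxi_ge[of "last w" w] by simp
      next
        assume "w \<noteq> []" "fst l + 1 < fst (last w)"
        then show False using mx maxi_ge[of "last w" w] by simp
      next
        fix u i e1 e2 W assume "w = u @ [(Suc i, e1), (i, e2)] @ W" "fst l = Suc i"
        then show False using mx maxi_ge[of "(Suc i,e1)" w] by simp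
      qed
    qed
  qed
qed

lemma red_ok: "valid_word w \<Longrightarrow> (\<not> reducible a b w \<longleftrightarrow> ok w)"
proof (induction w rule: rev_induct)
  case Nil
  have "\<not> reducible a b []" unfolding reducible_def using basic_rep_nonempty' by fastforce
  then show ?case by simp
next
  case (snoc l w)
  have v: "valid_word w" "1 \<le> fst l" using snoc.prems by auto
  have "(\<not> reducible a b (w @ [l])) \<longleftrightarrow> (\<not> reducible a b w \<and> \<not> PAT w l)"
    using reducible_snoc[OF snoc.prems] by blast
  also have "\<dots> \<longleftrightarrow> ok w \<and> \<not> PAT w l" using snoc.IH[OF v(1)] by blast
  also have "\<dots> \<longleftrightarrow> ok w \<and> ext w l" using notPAT_iff[OF _ v(2)] by blast
  also have "\<dots> \<longleftrightarrow> ok (w @ [l])" using v(2) by (simp add: ok_snoc)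
  finally show ?case .
qed

lemma rev_upt_Suc: "j \<le> i \<Longrightarrow> rev [j..<Suc i] = rev [Suc j..<Suc i] @ [j]"
  by (simp add: upt_conv_Cons)

lemma block_facts: "map fst b = rev [j..<Suc i] \<Longrightarrow> j \<le> i \<Longrightarrow>
   b \<noteq> [] \<and> fst (hd b) = i \<and> fst (last b) = j \<and> (\<forall>m\<in>set b. j \<le> fst m \<and> fst m \<le> i)"
proof -
  assume h: "map fst b = rev [j..<Suc i]" "j \<le> i"
  have ne: "b \<noteq> []" using h by auto
  have "hd (map fst b) = i" using h by (simp add: hd_rev)
  moreover have "last (map fst b) = j" using h by (simp add: last_rev upt_conv_Cons)
  moreover have "\<forall>m\<in>set b. j \<le> fst m \<and> fst m \<le> i"
  proof
    fix m assume "m \<in> set b"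
    then have "fst m \<in> set (map fst b)" by simp
    then show "j \<le> fst m \<and> fst m \<le> i" using h by auto
  qed
  ultimately show ?thesis using ne by (simp add: hd_map last_map)
qed

lemma block_ok: "map fst b = rev [j..<Suc i] \<Longrightarrow> 1 \<le> j \<Longrightarrow> j \<le> i \<Longrightarrow> ok w \<Longrightarrow> maxi w < i \<Longrightarrow>
   ok (w @ b) \<and> maxi (w @ b) = i"
proof (induction b arbitrary: j rule: rev_induct)
  case Nil then show ?case by simp
next
  case (snoc l b)
  have e: "map fst b @ [fst l] = rev [Suc j..<Suc i] @ [j]" using snoc.prems(1) rev_upt_Suc[OF snoc.prems(3)] by simp
  then have mb: "map fst b = rev [Suc j..<Suc i]" and fl: "fst l = j" by auto
  show ?case
  proof (cases "j = i")
    case True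
    then have "b = []" using mb by simp
    then show ?thesis using snoc.prems fl True by (simp add: ok_snoc ext_def)
  next
    case False
    then have ji: "Suc j \<le> i" using snoc.prems(3) by simp
    have IH: "ok (w @ b) \<and> maxi (w @ b) = i" using snoc.IH[OF mb _ ji snoc.prems(4,5)] snoc.prems(2) by simp
    have bf: "b \<noteq> [] \<and> fst (last b) = Suc j" using block_facts[OF mb ji] by simp
    have "ext (w @ b) l" using bf fl by (simp add: ext_def)
    moreover have "maxi (w @ b @ [l]) = max (maxi (w @ b)) (fst l)" using maxi_snoc[of "w @ b" l] by simp
    ultimately show ?thesis using IH fl snoc.prems(2,3) ok_snoc[of "w @ b" l] by auto
  qed
qed

lemma is_block_facts: "is_block b \<Longrightarrow> \<exists>i j. 1 \<le> j \<and> j \<le> i \<and> map fst b = rev [j..<Suc i]"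
  by (simp add: is_block_def)

lemma normal_ok: "(\<forall>b\<in>set bs. is_block b) \<Longrightarrow> sorted_wrt (<) (map (\<lambda>b. fst (hd b)) bs) \<Longrightarrow>
   ok (concat bs) \<and> (bs \<noteq> [] \<longrightarrow> maxi (concat bs) = fst (hd (last bs)))"
proof (induction bs rule: rev_induct)
  case Nil then show ?case by simp
next
  case (snoc b bs)
  have IH: "ok (concat bs)" "bs \<noteq> [] \<longrightarrow> maxi (concat bs) = fst (hd (last bs))"
    using snoc by (auto simp: sorted_wrt_append)
  obtain i j where b: "1 \<le> j" "j \<le> i" "map fst b = rev [j..<Suc i]" using snoc.prems(1) is_block_facts by force
  have hb: "fst (hd b) = i" using block_facts[OF b(3) b(2)] by simp
  have lt: "\<forall>x\<in>set bs. fst (hd x) < i" using snoc.prems(2) hb by (auto simp: sorted_wrt_append)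
  have mx: "maxi (concat bs) < i"
  proof (cases "bs = []")
    case True then show ?thesis using b by simp
  next
    case False then show ?thesis using IH lt by simp
  qed
  have "ok (concat bs @ b) \<and> maxi (concat bs @ b) = i" using block_ok[OF b(3) b(1) b(2) IH(1) mx] .
  then show ?case using hb by simp
qed

lemma last_concat: "\<forall>b\<in>set bs. b \<noteq> [] \<Longrightarrow> bs \<noteq> [] \<Longrightarrow> last (concat bs) = last (last bs)"
  by (induction bs rule: rev_induct) auto

lemma ok_normal: "ok w \<Longrightarrow> \<exists>bs. (\<forall>b\<in>set bs. is_block b) \<and> sorted_wrt (<) (map (\<lambda>b. fst (hd b)) bs) \<and>
   w = concat bs \<and> (bs \<noteq> [] \<longrightarrow> fst (hd (last bs)) = maxi w)"
proof (induction w rule: rev_induct)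
  case Nil then show ?case by (intro exI[of _ "[]"]) simp
next
  case (snoc l w)
  have okw: "ok w" "1 \<le> fst l" "ext w l" using snoc.prems by (auto simp: ok_snoc)
  obtain bs where bs: "\<forall>b\<in>set bs. is_block b" "sorted_wrt (<) (map (\<lambda>b. fst (hd b)) bs)"
    "w = concat bs" "bs \<noteq> [] \<longrightarrow> fst (hd (last bs)) = maxi w"
    using snoc.IH[OF okw(1)] by blast
  have nonemp: "\<forall>b\<in>set bs. b \<noteq> []" using bs(1) is_block_facts block_facts by fastforce
  show ?case
  proof (cases "w \<noteq> [] \<and> fst l + 1 = fst (last w)")
    case True
    then have bsne: "bs \<noteq> []" using bs(3) by auto
    then obtain bs0 b where bsb: "bs = bs0 @ [b]" by (metis rev_exhaust)
    obtain i j where b: "1 \<le> j" "j \<le> i" "map fst b = rev [j..<Suc i]" using bs(1) bsb is_block_facts by force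
    have bf: "b \<noteq> [] \<and> fst (hd b) = i \<and> fst (last b) = j" using block_facts[OF b(3) b(2)] by simp
    have lw: "last w = last b" using last_concat[OF nonemp bsne] bs(3) bsb by simp
    have fl: "fst l + 1 = j" using True lw bf by simp
    have j2: "1 \<le> j - 1" "j - 1 \<le> i" using fl okw(2) b by auto
    have mb: "map fst (b @ [l]) = rev [j - 1..<Suc i]"
      using b(3) rev_upt_Suc[of "j - 1" i] fl j2 by simp
    have blk: "is_block (b @ [l])" unfolding is_block_def using mb j2 by blast
    have hd_eq: "fst (hd (b @ [l])) = fst (hd b)" using bf by simp
    define bs' where "bs' = bs0 @ [b @ [l]]"
    have 1: "\<forall>b\<in>set bs'. is_block b" using bs(1) bsb blk by (auto simp: bs'_def)
    have 2: "map (\<lambda>b. fst (hd b)) bs' = map (\<lambda>b. fst (hd b)) bs" using bsb hd_eq by (simp add: bs'_def)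
    have 3: "w @ [l] = concat bs'" using bs(3) bsb by (simp add: bs'_def)
    have mxw: "maxi (w @ [l]) = maxi w" using True maxi_ge[of "last w" w] by auto
    have 4: "fst (hd (last bs')) = maxi (w @ [l])" using bs(4) bsb bsne hd_eq mxw by (simp add: bs'_def)
    show ?thesis using 1 2 3 4 bs(2) by (intro exI[of _ bs']) simp
  next
    case False
    then have mx: "maxi w < fst l" using okw(3) unfolding ext_def by auto
    define bs' where "bs' = bs @ [[l]]"
    have blk: "is_block [l]" unfolding is_block_def using okw(2) by (intro exI[of _ "fst l"]) simp
    have hds: "\<forall>x\<in>set bs. fst (hd x) < fst l"
    proof
      fix x assume x: "x \<in> set bs"
      then have "hd x \<in> set x" using nonemp by simp
      then have "hd x \<in> set w" using x bs(3) by auto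
      then show "fst (hd x) < fst l" using maxi_ge mx by fastforce
    qed
    have 2: "sorted_wrt (<) (map (\<lambda>b. fst (hd b)) bs')"
      using bs(2) hds by (auto simp: bs'_def sorted_wrt_append)
    show ?thesis using bs(1) blk 2 bs(3) mx by (intro exI[of _ bs']) (auto simp: bs'_def)
  qed
qed

lemma normal_iff_ok: "w \<in> normal_words \<longleftrightarrow> ok w"
  using ok_normal normal_ok unfolding normal_words_def by blast

lemma elem_red_word_iff: "(\<exists>t W'. elem_red_word a b t w W') \<longleftrightarrow> reducible a b w"
  unfolding elem_red_word_def reducible_def by blast

lemma red_words_eq: "red_words a b = normal_words"
proof -
  have "w \<in> red_words a b \<longleftrightarrow> ok w" for w
  proof -
    have "w \<in> red_words a b \<longleftrightarrow> valid_word w \<and> \<not> reducible a b w"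
      unfolding red_words_def using elem_red_word_iff[of a b w] by blast
    also have "\<dots> \<longleftrightarrow> ok w" using red_ok[of w a b] ok_valid by blast
    finally show ?thesis .
  qed
  then show ?thesis using normal_iff_ok by blast
qed

lemma wtp_bound: "valid_word w \<Longrightarrow> wtp w \<le> wt w * wt w"
proof (induction w)
  case Nil then show ?case by simp
next
  case (Cons l v)
  define a where "a = fst l"
  define b where "b = wt v"
  have a1: "1 \<le> a" using Cons.prems by (simp add: a_def)
  have IH: "wtp v \<le> b * b" using Cons by (simp add: b_def)
  have 1: "a \<le> a * a" using a1 by simp
  have 2: "b \<le> a * b" using a1 by simp
  have 3: "(a + b) * (a + b) = a * a + b * b + 2 * (a * b)" by (simp add: algebra_simps)
  have "a + b * b + b \<le> (a + b) * (a + b)" using 1 2 3 by linarith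
  then show ?case using IH by (simp add: a_def b_def)
qed

definition span_red :: "'k::comm_ring_1 \<Rightarrow> 'k \<Rightarrow> 'k elt \<Rightarrow> bool" where
  "span_red a b X \<longleftrightarrow> (\<exists>S c. finite S \<and> S \<subseteq> red_words a b \<and> pi_eq a b X (\<lambda>w. \<Sum>v\<in>S. c v * wd v w))"

context fixes \<alpha> \<beta> :: "'k::comm_ring_1" begin

lemma pi_trans: "pi_eq \<alpha> \<beta> X Y \<Longrightarrow> pi_eq \<alpha> \<beta> Y Z \<Longrightarrow> pi_eq \<alpha> \<beta> X Z"
proof -
  assume "pi_eq \<alpha> \<beta> X Y" "pi_eq \<alpha> \<beta> Y Z"
  then have "(\<lambda>w. (X w - Y w) + (Y w - Z w)) \<in> Kideal \<alpha> \<beta>" unfolding pi_eq_def by (rule Kideal.add)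
  then show ?thesis by (simp add: pi_eq_def)
qed

lemma pi_add: "pi_eq \<alpha> \<beta> X Y \<Longrightarrow> pi_eq \<alpha> \<beta> X' Y' \<Longrightarrow> pi_eq \<alpha> \<beta> (\<lambda>w. X w + X' w) (\<lambda>w. Y w + Y' w)"
proof -
  assume "pi_eq \<alpha> \<beta> X Y" "pi_eq \<alpha> \<beta> X' Y'"
  then have "(\<lambda>w. (X w - Y w) + (X' w - Y' w)) \<in> Kideal \<alpha> \<beta>" unfolding pi_eq_def by (rule Kideal.add)
  then show ?thesis by (simp add: pi_eq_def algebra_simps)
qed

lemma pi_smult: "pi_eq \<alpha> \<beta> X Y \<Longrightarrow> pi_eq \<alpha> \<beta> (\<lambda>w. d * X w) (\<lambda>w. d * Y w)"
proof -
  assume "pi_eq \<alpha> \<beta> X Y"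
  then have "(\<lambda>w. d * (X w - Y w)) \<in> Kideal \<alpha> \<beta>" unfolding pi_eq_def by (rule Kideal.smult)
  then show ?thesis by (simp add: pi_eq_def algebra_simps)
qed

lemma pi_refl: "pi_eq \<alpha> \<beta> X X"
  using Kideal.zero[of \<alpha> \<beta>] by (simp add: pi_eq_def)

lemma span_pi: "pi_eq \<alpha> \<beta> X Y \<Longrightarrow> span_red \<alpha> \<beta> Y \<Longrightarrow> span_red \<alpha> \<beta> X"
proof -
  assume a: "pi_eq \<alpha> \<beta> X Y" "span_red \<alpha> \<beta> Y"
  then obtain S c where "finite S" "S \<subseteq> red_words \<alpha> \<beta>" "pi_eq \<alpha> \<beta> Y (\<lambda>w. \<Sum>v\<in>S. c v * wd v w)"
    unfolding span_red_def by blast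
  then show ?thesis unfolding span_red_def using pi_trans[OF a(1)] by (intro exI[of _ S] exI[of _ c]) simp
qed

lemma span_zero: "span_red \<alpha> \<beta> (\<lambda>w. 0)"
  unfolding span_red_def using pi_refl by (intro exI[of _ "{}"]) simp

lemma span_add: "span_red \<alpha> \<beta> X \<Longrightarrow> span_red \<alpha> \<beta> Y \<Longrightarrow> span_red \<alpha> \<beta> (\<lambda>w. X w + Y w)"
proof -
  assume "span_red \<alpha> \<beta> X" "span_red \<alpha> \<beta> Y"
  then obtain S1 c1 S2 c2 where h: "finite S1" "S1 \<subseteq> red_words \<alpha> \<beta>" "pi_eq \<alpha> \<beta> X (\<lambda>w. \<Sum>v\<in>S1. c1 v * wd v w)"
    "finite S2" "S2 \<subseteq> red_words \<alpha> \<beta>" "pi_eq \<alpha> \<beta> Y (\<lambda>w. \<Sum>v\<in>S2. c2 v * wd v w)"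
    unfolding span_red_def by blast
  define c where "c v = (if v \<in> S1 then c1 v else 0) + (if v \<in> S2 then c2 v else 0)" for v
  have fin: "finite (S1 \<union> S2)" using h by simp
  have eq: "(\<Sum>v\<in>S1 \<union> S2. c v * wd v w) = (\<Sum>v\<in>S1. c1 v * wd v w) + (\<Sum>v\<in>S2. c2 v * wd v w)" for w
  proof -
    have "(\<Sum>v\<in>S1 \<union> S2. c v * wd v w) = (\<Sum>v\<in>S1 \<union> S2. (if v \<in> S1 then c1 v * wd v w else 0)) + (\<Sum>v\<in>S1 \<union> S2. (if v \<in> S2 then c2 v * wd v w else 0))"
      unfolding c_def sum.distrib[symmetric] by (rule sum.cong) (auto simp: distrib_right)
    also have "(\<Sum>v\<in>S1 \<union> S2. (if v \<in> S1 then c1 v * wd v w else 0)) = (\<Sum>v\<in>S1. c1 v * wd v w)"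
      using sum.inter_restrict[OF fin, of "\<lambda>v. c1 v * wd v w" S1] by (simp add: Int_absorb1 Int_commute)
    also have "(\<Sum>v\<in>S1 \<union> S2. (if v \<in> S2 then c2 v * wd v w else 0)) = (\<Sum>v\<in>S2. c2 v * wd v w)"
      using sum.inter_restrict[OF fin, of "\<lambda>v. c2 v * wd v w" S2] by (simp add: Int_absorb1 Int_commute)
    finally show ?thesis .
  qed
  have "pi_eq \<alpha> \<beta> (\<lambda>w. X w + Y w) (\<lambda>w. \<Sum>v\<in>S1 \<union> S2. c v * wd v w)"
    using pi_add[OF h(3) h(6)] eq by simp
  then show ?thesis unfolding span_red_def using fin h(2) h(5) by (intro exI[of _ "S1 \<union> S2"] exI[of _ c]) simp
qed

lemma span_smult: "span_red \<alpha> \<beta> X \<Longrightarrow> span_red \<alpha> \<beta> (\<lambda>w. d * X w)"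
proof -
  assume "span_red \<alpha> \<beta> X"
  then obtain S c where h: "finite S" "S \<subseteq> red_words \<alpha> \<beta>" "pi_eq \<alpha> \<beta> X (\<lambda>w. \<Sum>v\<in>S. c v * wd v w)"
    unfolding span_red_def by blast
  have "pi_eq \<alpha> \<beta> (\<lambda>w. d * X w) (\<lambda>w. \<Sum>v\<in>S. (d * c v) * wd v w)"
    using pi_smult[OF h(3), of d] by (simp add: sum_distrib_left mult.assoc)
  then show ?thesis unfolding span_red_def using h by (intro exI[of _ S] exI[of _ "\<lambda>v. d * c v"]) simp
qed

lemma span_sum: "finite F \<Longrightarrow> (\<And>u. u \<in> F \<Longrightarrow> span_red \<alpha> \<beta> (f u)) \<Longrightarrow> span_red \<alpha> \<beta> (\<lambda>w. \<Sum>u\<in>F. f u w)"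
proof (induction F rule: finite_induct)
  case empty then show ?case using span_zero by simp
next
  case (insert x F)
  have "span_red \<alpha> \<beta> (\<lambda>w. f x w + (\<Sum>u\<in>F. f u w))"
    using insert by (intro span_add) auto
  then show ?case using insert by simp
qed

lemma span_lc: "(\<And>c u. (c,u) \<in> set L \<Longrightarrow> span_red \<alpha> \<beta> (wd u)) \<Longrightarrow> span_red \<alpha> \<beta> (lc L)"
proof (induction L)
  case Nil then show ?case using span_zero by (simp add: lc_Nil)
next
  case (Cons x L)
  obtain c u where x: "x = (c,u)" by fastforce
  have eq: "lc (x # L) = (\<lambda>w. c * wd u w + lc L w)"
    by (rule ext) (simp add: x lc_Cons wd_def)
  have "span_red \<alpha> \<beta> (\<lambda>w. c * wd u w + lc L w)"
    using Cons x by (intro span_add span_smult) auto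
  then show ?case using eq by simp
qed

lemma span_word: "valid_word w \<Longrightarrow> span_red \<alpha> \<beta> (wd w)"
proof (induction w rule: wf_induct[OF wf_measures[of "[wt, \<lambda>w. wt w * wt w - wtp w]"]])
  case (1 w)
  show ?case
  proof (cases "w \<in> red_words \<alpha> \<beta>")
    case True
    have "pi_eq \<alpha> \<beta> (wd w) (\<lambda>x. \<Sum>v\<in>{w}. 1 * wd v x)" using pi_refl by simp
    then show ?thesis unfolding span_red_def using True by (intro exI[of _ "{w}"] exI[of _ "\<lambda>_. 1"]) simp
  next
    case False
    then obtain t W' where e: "elem_red_word \<alpha> \<beta> t w W'" using 1(2) unfolding red_words_def by blast
    obtain L where L: "W' = lc L" "red_res \<alpha> \<beta> t w L" using ewr[OF 1(2) e] by blast
    have pi: "pi_eq \<alpha> \<beta> (wd w) (lc L)"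
    proof -
      have "lc ((1,w) # negl L) = (\<lambda>x. wd w x - lc L x)"
        by (rule ext) (simp add: lc_Cons lc_negl wd_def)
      then show ?thesis using L(2) by (simp add: red_res_def relK_def pi_eq_def)
    qed
    have sp: "span_red \<alpha> \<beta> (lc L)"
    proof (cases "t = Rviii")
      case True
      then obtain Y where Y: "L = [(1,Y)]" "valid_word Y" "wt Y = wt w" "wtp w < wtp Y"
        using L(2) unfolding red_res_def by blast
      have "wtp Y \<le> wt Y * wt Y" using wtp_bound[OF Y(2)] .
      then have "(Y, w) \<in> measures [wt, \<lambda>w. wt w * wt w - wtp w]" using Y by simp
      then have "span_red \<alpha> \<beta> (wd Y)" using 1(1) Y(2) by blast
      then show ?thesis using Y(1) by (intro span_lc) auto
    next
      case False
      then have g: "good_list L (wt w)" using L(2) unfolding red_res_def by blast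
      show ?thesis
      proof (rule span_lc)
        fix c u assume cu: "(c,u) \<in> set L"
        then have "valid_word u" "wt u < wt w" using g unfolding good_list_def by auto
        then show "span_red \<alpha> \<beta> (wd u)" using 1(1) by simp
      qed
    qed
    show ?thesis using span_pi[OF pi sp] .
  qed
qed

lemma in_kF_sum: "in_kF X \<Longrightarrow> X = (\<lambda>w. \<Sum>u\<in>{w. X w \<noteq> 0}. X u * wd u w)"
proof (rule ext)
  fix w assume k: "in_kF X"
  have "(\<Sum>u\<in>{w. X w \<noteq> 0}. X u * wd u w) = (\<Sum>u\<in>{w. X w \<noteq> 0}. if u = w then X u else 0)"
    by (rule sum.cong) (auto simp: wd_def)
  also have "\<dots> = X w" using k by (simp add: in_kF_def sum.delta')
  finally show "X w = (\<Sum>u\<in>{w. X w \<noteq> 0}. X u * wd u w)" by simp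
qed

lemma partB: "in_kF X \<Longrightarrow> span_red \<alpha> \<beta> X"
proof -
  assume k: "in_kF X"
  have "span_red \<alpha> \<beta> (\<lambda>w. \<Sum>u\<in>{w. X w \<noteq> 0}. X u * wd u w)"
    using k by (intro span_sum span_smult span_word) (auto simp: in_kF_def)
  then show ?thesis by (subst in_kF_sum[OF k])
qed

end

theorem proposition2p1:
  fixes \<alpha> \<beta> :: "'k::comm_ring_1"
  shows
    "(\<forall>X X'. in_kF X \<longrightarrow> elem_red \<alpha> \<beta> X X' \<longrightarrow>
        pi_eq \<alpha> \<beta> X X' \<and> wt_elt X' \<le> wt_elt X)
   \<and> (\<forall>W t X'. valid_word W \<longrightarrow> elem_red_word \<alpha> \<beta> t W X' \<longrightarrow>
        ((wt_elt X' = wt W \<longleftrightarrow> t = Rviii) \<and>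
         (t = Rviii \<longrightarrow> (\<exists>Y. X' = wd Y \<and> wtp W < wtp Y))))
   \<and> (\<forall>X. in_kF X \<longrightarrow> (\<exists>S c. finite S \<and> S \<subseteq> red_words \<alpha> \<beta> \<and>
        pi_eq \<alpha> \<beta> X (\<lambda>w. \<Sum>v\<in>S. c v * wd v w)))
   \<and> red_words \<alpha> \<beta> = normal_words"
proof -
  have A: "\<forall>X X'. in_kF X \<longrightarrow> elem_red \<alpha> \<beta> X X' \<longrightarrow> pi_eq \<alpha> \<beta> X X' \<and> wt_elt X' \<le> wt_elt X"
    using partA1 by blast
  have B: "\<forall>W t X'. valid_word W \<longrightarrow> elem_red_word \<alpha> \<beta> t W X' \<longrightarrow>
        ((wt_elt X' = wt W \<longleftrightarrow> t = Rviii) \<and> (t = Rviii \<longrightarrow> (\<exists>Y. X' = wd Y \<and> wtp W < wtp Y)))"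
    using partA2 by blast
  have C: "\<forall>X. in_kF X \<longrightarrow> (\<exists>S c. finite S \<and> S \<subseteq> red_words \<alpha> \<beta> \<and> pi_eq \<alpha> \<beta> X (\<lambda>w. \<Sum>v\<in>S. c v * wd v w))"
    using partB unfolding span_red_def by blast
  show ?thesis by (rule conjI[OF A conjI[OF B conjI[OF C red_words_eq]]])
qed

end
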